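(* For all probability measures $\mu_1,\mu_2$ on $E$ and all $s,t,T\in I$ with $0\le s\le s+1\le t\le T$, \[ \left\|\mu_1 K_{s,t}^T-\mu_2 K_{s,t}^T\right\|_{TV}\le \prod_{k=0}^{\lfloor t-s\rfloor-1}\bigl(1-d_{t-k}\bigr)\,\|\mu_1-\mu_2\|_{TV} \] and \[ \left\|\Phi_{s,t}(\mu_1)-\Phi_{s,t}(\mu_2)\right\|_{TV}\le 2\prod_{k=0}^{\lfloor t-s\rfloor-1}\bigl(1-d_{t-k}\bigr). \]
   Context: Let $I=[0,+\infty)$ or $I=\mathbb{N}$. Let $(X_t)_{t\in I}$ be a (possibly time-inhomogeneous) Markov process with values in a measurable space $(E,\mathcal E)$, defined on $(\Omega,(\mathcal F_{s,t})_{0\le s\le t\in I},\mathbb P)$, with $X_t$ being $\mathcal F_{s,r}$-measurable for all $s\le t\le r$. For $s\in I$ and a probability measure $\mu$ on $E$, $\mathbb P_{s,\mu}$ (resp. $\mathbb P_{s,x}$ when $\mu=\delta_x$) denotes the law of the process $(X_t)_{t\ge s}$ started at time $s$ with distribution $\mu$, and $\mathbb E_{s,\mu}$ the corresponding expectation. Let $\{Z_{s,t}: s\le t,\ s,t\in I\}$ be nonnegative random variables with $Z_{s,t}$ $\mathcal F_{s,t}$-measurable, multiplicative ($Z_{s,r}Z_{r,t}=Z_{s,t}$ for $s\le r\le t$), and such that $\mathbb E_{s,x}(Z_{s,t})>0$ and $\sup_{y\in E}\mathbb E_{s,y}(Z_{s,t})<\infty$ for all $s\le t$ in $I$ and $x\in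 E$. For a probability measure $\mu$ and $s\le t$, $\Phi_{s,t}(\mu)$ is the probability measure with $\Phi_{s,t}(\mu)(f)=\mathbb E_{s,\mu}(f(X_t)Z_{s,t})/\mathbb E_{s,\mu}(Z_{s,t})$ for bounded measurable $f$. For $s\in I$, $s\ge 1$, and $x_1,x_2\in E$, let $\nu_{s,x_1,x_2}=\min_{i=1,2}\Phi_{s-1,s}(\delta_{x_i})$ (the largest measure smaller than both measures) and \[ d_s=\inf_{t\ge 0,\ x_1,x_2\in E}\frac{\mathbb E_{s,\nu_{s,x_1,x_2}}(Z_{s,s+t})}{\sup_{x\in E}\mathbb E_{s,x}(Z_{s,s+t})},\] where $\mathbb E_{s,\nu}(\cdot)=\int\mathbb E_{s,x}(\cdot)\nu(dx)$ for a nonnegative measure $\nu$. For $0\le s\le t\le T$ and bounded measurable $f$, $K^T_{s,t}f(x)=\mathbb E_{s,x}(f(X_t)Z_{s,T})/\mathbb E_{s,x}(Z_{s,T})$ and $\mu K^T_{s,t}f=\int_E K^T_{s,t}f(x)\mu(dx)$. For a finite signed measure $\mu$, $\|\mu\|_{TV}=\sup_{A\in\mathcal E}\mu(A)-\inf_{A\in\mathcal E}\mu(A)$. *)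

theory Defs
  imports "HOL-Probability.Probability"
begin

text \<open>Time is real-valued; the time set I is either [0,+oo) or the natural numbers
 (embedded into the reals).  The state space is a measurable space SE of type 'e measure,
 the underlying probability space Omega carries the measurable structure M, the
 (two-parameter) filtration is F s t (a sub-sigma-algebra of M), the process is X,
 the laws P s x (= P_{s,x}) are probability measures on M, and Z s t are the
 penalisation weights.\<close>

definition time_set :: "real set \<Rightarrow> bool" where
  "time_set I \<longleftrightarrow> I = {0..} \<or> I = range real"

definition penalized_markov ::
  "real set \<Rightarrow> 'e measure \<Rightarrow> 'w measure \<Rightarrow> (real \<Rightarrow> real \<Rightarrow> 'w measure)
   \<Rightarrow> (real \<Rightarrow> 'w \<Rightarrow> 'e) \<Rightarrow> (real \<Rightarrow> 'e \<Rightarrow> 'w measure)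
   \<Rightarrow> (real \<Rightarrow> real \<Rightarrow> 'w \<Rightarrow> real) \<Rightarrow> bool" where
  "penalized_markov I SE M F X P Z \<longleftrightarrow>
     time_set I
   \<comment> \<open>filtration: sub-sigma-algebras of M, increasing in the interval [s,t]\<close>
   \<and> (\<forall>s\<in>I. \<forall>t\<in>I. s \<le> t \<longrightarrow> space (F s t) = space M \<and> sets (F s t) \<subseteq> sets M)
   \<and> (\<forall>s\<in>I. \<forall>s'\<in>I. \<forall>t'\<in>I. \<forall>t\<in>I. s \<le> s' \<and> s' \<le> t' \<and> t' \<le> t
        \<longrightarrow> sets (F s' t') \<subseteq> sets (F s t))
   \<comment> \<open>X_t is F_{s,r}-measurable for s <= t <= r\<close>
   \<and> (\<forall>s\<in>I. \<forall>t\<in>I. \<forall>r\<in>I. s \<le> t \<and> t \<le> r \<longrightarrow> X t \<in> measurable (F s r) SE)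
   \<comment> \<open>P_{s,x} is a probability measure on Omega, measurable in x\<close>
   \<and> (\<forall>s\<in>I. P s \<in> measurable SE (prob_algebra M))
   \<comment> \<open>under P_{s,x} the process starts at x at time s\<close>
   \<and> (\<forall>s\<in>I. \<forall>x\<in>space SE. distr (P s x) SE (X s) = return SE x)
   \<comment> \<open>Markov property: E_{s,x}(G 1_A) = E_{s,x}(1_A E_{u,X_u}(G)) for A in F_{s,u}
       and G >= 0 F_{u,t}-measurable\<close>
   \<and> (\<forall>s\<in>I. \<forall>u\<in>I. \<forall>t\<in>I. \<forall>x\<in>space SE. \<forall>A\<in>sets (F s u).
        \<forall>G \<in> borel_measurable (F u t). s \<le> u \<and> u \<le> t \<longrightarrow>
        (\<integral>\<^sup>+\<omega>. indicator A \<omega> * G \<omega> \<partial>P s x)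
        = (\<integral>\<^sup>+\<omega>. indicator A \<omega> * (\<integral>\<^sup>+\<omega>'. G \<omega>' \<partial>P u (X u \<omega>)) \<partial>P s x))
   \<comment> \<open>Z_{s,t} nonnegative, F_{s,t}-measurable, multiplicative\<close>
   \<and> (\<forall>s\<in>I. \<forall>t\<in>I. s \<le> t \<longrightarrow> Z s t \<in> borel_measurable (F s t) \<and> (\<forall>\<omega>. 0 \<le> Z s t \<omega>))
   \<and> (\<forall>s\<in>I. \<forall>r\<in>I. \<forall>t\<in>I. s \<le> r \<and> r \<le> t \<longrightarrow> (\<forall>\<omega>. Z s r \<omega> * Z r t \<omega> = Z s t \<omega>))
   \<comment> \<open>E_{s,x}(Z_{s,t}) > 0 and sup_y E_{s,y}(Z_{s,t}) < oo\<close>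
   \<and> (\<forall>s\<in>I. \<forall>t\<in>I. s \<le> t \<longrightarrow>
        (\<forall>x\<in>space SE. 0 < (\<integral>\<^sup>+\<omega>. ennreal (Z s t \<omega>) \<partial>P s x))
      \<and> (SUP y\<in>space SE. \<integral>\<^sup>+\<omega>. ennreal (Z s t \<omega>) \<partial>P s y) < \<infinity>)"

definition Emu :: "(real \<Rightarrow> 'e \<Rightarrow> 'w measure) \<Rightarrow> real \<Rightarrow> 'e measure \<Rightarrow> ('w \<Rightarrow> ennreal) \<Rightarrow> ennreal" where
  "Emu P s \<mu> G = (\<integral>\<^sup>+x. (\<integral>\<^sup>+\<omega>. G \<omega> \<partial>P s x) \<partial>\<mu>)"

definition Phi ::
  "'e measure \<Rightarrow> (real \<Rightarrow> 'w \<Rightarrow> 'e) \<Rightarrow> (real \<Rightarrow> 'e \<Rightarrow> 'w measure)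
   \<Rightarrow> (real \<Rightarrow> real \<Rightarrow> 'w \<Rightarrow> real) \<Rightarrow> real \<Rightarrow> real \<Rightarrow> 'e measure \<Rightarrow> 'e measure" where
  "Phi SE X P Z s t \<mu> = measure_of (space SE) (sets SE)
     (\<lambda>A. Emu P s \<mu> (\<lambda>\<omega>. indicator A (X t \<omega>) * ennreal (Z s t \<omega>))
          / Emu P s \<mu> (\<lambda>\<omega>. ennreal (Z s t \<omega>)))"

definition min_measure :: "'e measure \<Rightarrow> 'e measure \<Rightarrow> 'e measure \<Rightarrow> 'e measure" where
  "min_measure SE \<mu> \<nu> = (THE m. sets m = sets SE
      \<and> (\<forall>A\<in>sets SE. emeasure m A \<le> emeasure \<mu> A \<and> emeasure m A \<le> emeasure \<nu> A)
      \<and> (\<forall>m'. sets m' = sets SE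
           \<and> (\<forall>A\<in>sets SE. emeasure m' A \<le> emeasure \<mu> A \<and> emeasure m' A \<le> emeasure \<nu> A)
           \<longrightarrow> (\<forall>A\<in>sets SE. emeasure m' A \<le> emeasure m A)))"

definition nu_meas ::
  "'e measure \<Rightarrow> (real \<Rightarrow> 'w \<Rightarrow> 'e) \<Rightarrow> (real \<Rightarrow> 'e \<Rightarrow> 'w measure)
   \<Rightarrow> (real \<Rightarrow> real \<Rightarrow> 'w \<Rightarrow> real) \<Rightarrow> real \<Rightarrow> 'e \<Rightarrow> 'e \<Rightarrow> 'e measure" where
  "nu_meas SE X P Z s x1 x2 = min_measure SE
      (Phi SE X P Z (s - 1) s (return SE x1)) (Phi SE X P Z (s - 1) s (return SE x2))"

definition d_coef ::
  "real set \<Rightarrow> 'e measure \<Rightarrow> (real \<Rightarrow> 'w \<Rightarrow> 'e) \<Rightarrow> (real \<Rightarrow> 'e \<Rightarrow> 'w measure)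
   \<Rightarrow> (real \<Rightarrow> real \<Rightarrow> 'w \<Rightarrow> real) \<Rightarrow> real \<Rightarrow> real" where
  "d_coef I SE X P Z s = enn2real
     (INF t\<in>{t. 0 \<le> t \<and> s + t \<in> I}. INF x1\<in>space SE. INF x2\<in>space SE.
        Emu P s (nu_meas SE X P Z s x1 x2) (\<lambda>\<omega>. ennreal (Z s (s + t) \<omega>))
        / (SUP x\<in>space SE. \<integral>\<^sup>+\<omega>. ennreal (Z s (s + t) \<omega>) \<partial>P s x))"

definition Kop ::
  "(real \<Rightarrow> 'w \<Rightarrow> 'e) \<Rightarrow> (real \<Rightarrow> 'e \<Rightarrow> 'w measure) \<Rightarrow> (real \<Rightarrow> real \<Rightarrow> 'w \<Rightarrow> real)
   \<Rightarrow> real \<Rightarrow> real \<Rightarrow> real \<Rightarrow> ('e \<Rightarrow> ennreal) \<Rightarrow> 'e \<Rightarrow> ennreal" where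
  "Kop X P Z s t T f x = (\<integral>\<^sup>+\<omega>. f (X t \<omega>) * ennreal (Z s T \<omega>) \<partial>P s x)
                         / (\<integral>\<^sup>+\<omega>. ennreal (Z s T \<omega>) \<partial>P s x)"

definition muK ::
  "'e measure \<Rightarrow> (real \<Rightarrow> 'w \<Rightarrow> 'e) \<Rightarrow> (real \<Rightarrow> 'e \<Rightarrow> 'w measure) \<Rightarrow> (real \<Rightarrow> real \<Rightarrow> 'w \<Rightarrow> real)
   \<Rightarrow> real \<Rightarrow> real \<Rightarrow> real \<Rightarrow> 'e measure \<Rightarrow> 'e measure" where
  "muK SE X P Z s t T \<mu> = measure_of (space SE) (sets SE)
      (\<lambda>A. \<integral>\<^sup>+x. Kop X P Z s t T (indicator A) x \<partial>\<mu>)"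

definition tv_norm :: "'e measure \<Rightarrow> 'e measure \<Rightarrow> 'e measure \<Rightarrow> real" where
  "tv_norm SE \<mu> \<nu> = (SUP A\<in>sets SE. measure \<mu> A - measure \<nu> A)
                    - (INF A\<in>sets SE. measure \<mu> A - measure \<nu> A)"

end

theory Submission
  imports Defs
begin


locale pmk =
  fixes I :: "real set" and SE :: "'e measure" and M :: "'w measure"
    and F :: "real \<Rightarrow> real \<Rightarrow> 'w measure" and X :: "real \<Rightarrow> 'w \<Rightarrow> 'e"
    and P :: "real \<Rightarrow> 'e \<Rightarrow> 'w measure" and Z :: "real \<Rightarrow> real \<Rightarrow> 'w \<Rightarrow> real"
  assumes setting: "penalized_markov I SE M F X P Z"
begin

lemma pm1: "time_set I" using setting[unfolded penalized_markov_def, THEN conjunct1] .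
lemma pm2: "\<forall>s\<in>I. \<forall>t\<in>I. s \<le> t \<longrightarrow> space (F s t) = space M \<and> sets (F s t) \<subseteq> sets M" using setting[unfolded penalized_markov_def, THEN conjunct2, THEN conjunct1] .
lemma pm4: "\<forall>s\<in>I. \<forall>t\<in>I. \<forall>r\<in>I. s \<le> t \<and> t \<le> r \<longrightarrow> X t \<in> measurable (F s r) SE" using setting[unfolded penalized_markov_def, THEN conjunct2, THEN conjunct2, THEN conjunct2, THEN conjunct1] .
lemma pm5: "\<forall>s\<in>I. P s \<in> measurable SE (prob_algebra M)" using setting[unfolded penalized_markov_def, THEN conjunct2, THEN conjunct2, THEN conjunct2, THEN conjunct2, THEN conjunct1] .
lemma pm6: "\<forall>s\<in>I. \<forall>x\<in>space SE. distr (P s x) SE (X s) = return SE x" using setting[unfolded penalized_markov_def, THEN conjunct2, THEN conjunct2, THEN conjunct2, THEN conjunct2, THEN conjunct2, THEN conjunct1] .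
lemma pm7: "\<forall>s\<in>I. \<forall>u\<in>I. \<forall>t\<in>I. \<forall>x\<in>space SE. \<forall>A\<in>sets (F s u).
        \<forall>G \<in> borel_measurable (F u t). s \<le> u \<and> u \<le> t \<longrightarrow>
        (\<integral>\<^sup>+\<omega>. indicator A \<omega> * G \<omega> \<partial>P s x)
        = (\<integral>\<^sup>+\<omega>. indicator A \<omega> * (\<integral>\<^sup>+\<omega>'. G \<omega>' \<partial>P u (X u \<omega>)) \<partial>P s x)" using setting[unfolded penalized_markov_def, THEN conjunct2, THEN conjunct2, THEN conjunct2, THEN conjunct2, THEN conjunct2, THEN conjunct2, THEN conjunct1] .
lemma pm8: "\<forall>s\<in>I. \<forall>t\<in>I. s \<le> t \<longrightarrow> Z s t \<in> borel_measurable (F s t) \<and> (\<forall>\<omega>. 0 \<le> Z s t \<omega>)" using setting[unfolded penalized_markov_def, THEN conjunct2, THEN conjunct2, THEN conjunct2, THEN conjunct2, THEN conjunct2, THEN conjunct2, THEN conjunct2, THEN conjunct1] .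
lemma pm9: "\<forall>s\<in>I. \<forall>r\<in>I. \<forall>t\<in>I. s \<le> r \<and> r \<le> t \<longrightarrow> (\<forall>\<omega>. Z s r \<omega> * Z r t \<omega> = Z s t \<omega>)" using setting[unfolded penalized_markov_def, THEN conjunct2, THEN conjunct2, THEN conjunct2, THEN conjunct2, THEN conjunct2, THEN conjunct2, THEN conjunct2, THEN conjunct2, THEN conjunct1] .
lemma pm10: "\<forall>s\<in>I. \<forall>t\<in>I. s \<le> t \<longrightarrow>
        (\<forall>x\<in>space SE. 0 < (\<integral>\<^sup>+\<omega>. ennreal (Z s t \<omega>) \<partial>P s x))
      \<and> (SUP y\<in>space SE. \<integral>\<^sup>+\<omega>. ennreal (Z s t \<omega>) \<partial>P s y) < \<infinity>" using setting[unfolded penalized_markov_def, THEN conjunct2, THEN conjunct2, THEN conjunct2, THEN conjunct2, THEN conjunct2, THEN conjunct2, THEN conjunct2, THEN conjunct2, THEN conjunct2] .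

lemma tset: "time_set I" using pm1 .

lemma I_nonneg: "r \<in> I \<Longrightarrow> 0 \<le> r"
  using tset unfolding time_set_def by auto

lemma I_minus: assumes "r \<in> I" "0 \<le> r - real k" shows "r - real k \<in> I"
proof (cases "I = range real")
  case True
  then obtain m where m: "r = real m" using assms by auto
  then have "k \<le> m" using assms by simp
  then have "r - real k = real (m - k)" using m by (simp add: of_nat_diff)
  then show ?thesis using True by (metis rangeI)
next
  case False
  then have "I = {0..}" using tset unfolding time_set_def by blast
  then show ?thesis using assms by simp
qed

lemma I_diff: assumes "r \<in> I" "T \<in> I" "r \<le> T" shows "T - r \<in> I"
proof (cases "I = range real")
  case True
  then obtain m n where m: "r = real m" "T = real n" using assms by auto
  then have "m \<le> n" using assms by simp
  then have "T - r = real (n - m)" using m by (simp add: of_nat_diff)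
  then show ?thesis using True by (metis rangeI)
next
  case False
  then have "I = {0..}" using tset unfolding time_set_def by blast
  then show ?thesis using assms by simp
qed

lemma F_sub: "s \<in> I \<Longrightarrow> t \<in> I \<Longrightarrow> s \<le> t \<Longrightarrow> subalgebra M (F s t)"
  using pm2 unfolding subalgebra_def by blast

lemma X_measF: "s \<in> I \<Longrightarrow> t \<in> I \<Longrightarrow> r \<in> I \<Longrightarrow> s \<le> t \<Longrightarrow> t \<le> r \<Longrightarrow> X t \<in> measurable (F s r) SE"
  using pm4 by blast

lemma X_meas: "t \<in> I \<Longrightarrow> X t \<in> measurable M SE"
  using X_measF[of t t t] F_sub[of t t] measurable_from_subalg by blast

lemma Z_measF: "s \<in> I \<Longrightarrow> t \<in> I \<Longrightarrow> s \<le> t \<Longrightarrow> Z s t \<in> borel_measurable (F s t)"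
  using pm8 by blast

lemma Z_meas: "s \<in> I \<Longrightarrow> t \<in> I \<Longrightarrow> s \<le> t \<Longrightarrow> Z s t \<in> borel_measurable M"
  using Z_measF F_sub measurable_from_subalg by blast

lemma Z_nonneg: "s \<in> I \<Longrightarrow> t \<in> I \<Longrightarrow> s \<le> t \<Longrightarrow> 0 \<le> Z s t \<omega>"
  using pm8 by blast

lemma Z_mult: "s \<in> I \<Longrightarrow> r \<in> I \<Longrightarrow> t \<in> I \<Longrightarrow> s \<le> r \<Longrightarrow> r \<le> t \<Longrightarrow> Z s r \<omega> * Z r t \<omega> = Z s t \<omega>"
  using pm9 by blast

lemma P_meas: "s \<in> I \<Longrightarrow> P s \<in> measurable SE (prob_algebra M)"
  using pm5 by blast

lemma P_sub: "s \<in> I \<Longrightarrow> P s \<in> measurable SE (subprob_algebra M)"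
  using P_meas measurable_prob_algebraD by blast

lemma P_prob: "s \<in> I \<Longrightarrow> x \<in> space SE \<Longrightarrow> prob_space (P s x)"
  using measurable_space[OF P_meas] by (auto simp: space_prob_algebra)

lemma P_sets: "s \<in> I \<Longrightarrow> x \<in> space SE \<Longrightarrow> sets (P s x) = sets M"
  using measurable_space[OF P_meas] by (auto simp: space_prob_algebra)

lemma P_space: "s \<in> I \<Longrightarrow> x \<in> space SE \<Longrightarrow> space (P s x) = space M"
  using P_sets sets_eq_imp_space_eq by blast

lemma start: "s \<in> I \<Longrightarrow> x \<in> space SE \<Longrightarrow> distr (P s x) SE (X s) = return SE x"
  using pm6 by blast

lemma markov: "s \<in> I \<Longrightarrow> u \<in> I \<Longrightarrow> t \<in> I \<Longrightarrow> x \<in> space SE \<Longrightarrow> A \<in> sets (F s u) \<Longrightarrow>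
   G \<in> borel_measurable (F u t) \<Longrightarrow> s \<le> u \<Longrightarrow> u \<le> t \<Longrightarrow>
   (\<integral>\<^sup>+\<omega>. indicator A \<omega> * G \<omega> \<partial>P s x)
        = (\<integral>\<^sup>+\<omega>. indicator A \<omega> * (\<integral>\<^sup>+\<omega>'. G \<omega>' \<partial>P u (X u \<omega>)) \<partial>P s x)"
  using pm7 by blast

definition H :: "real \<Rightarrow> real \<Rightarrow> 'e \<Rightarrow> ennreal" where
  "H s t x = (\<integral>\<^sup>+\<omega>. ennreal (Z s t \<omega>) \<partial>P s x)"

definition Hs :: "real \<Rightarrow> real \<Rightarrow> ennreal" where
  "Hs s t = (SUP y\<in>space SE. H s t y)"

lemma H_pos: "s \<in> I \<Longrightarrow> t \<in> I \<Longrightarrow> s \<le> t \<Longrightarrow> x \<in> space SE \<Longrightarrow> 0 < H s t x"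
  using pm10 unfolding H_def by blast

lemma Hs_fin: "s \<in> I \<Longrightarrow> t \<in> I \<Longrightarrow> s \<le> t \<Longrightarrow> Hs s t < \<infinity>"
  using pm10 unfolding H_def Hs_def by blast

lemma H_le: "x \<in> space SE \<Longrightarrow> H s t x \<le> Hs s t"
  unfolding Hs_def by (rule SUP_upper)

lemma H_fin: "s \<in> I \<Longrightarrow> t \<in> I \<Longrightarrow> s \<le> t \<Longrightarrow> x \<in> space SE \<Longrightarrow> H s t x < \<infinity>"
  using H_le Hs_fin le_less_trans by blast

lemma EP_meas: "s \<in> I \<Longrightarrow> G \<in> borel_measurable M \<Longrightarrow> (\<lambda>x. \<integral>\<^sup>+\<omega>. G \<omega> \<partial>P s x) \<in> borel_measurable SE"
  using measurable_compose[OF P_sub nn_integral_measurable_subprob_algebra] by blast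

lemma H_meas: assumes "s \<in> I" "t \<in> I" "s \<le> t" shows "H s t \<in> borel_measurable SE"
proof -
  have [measurable]: "Z s t \<in> borel_measurable M" using assms by (rule Z_meas)
  show ?thesis unfolding H_def by (intro EP_meas assms) measurable
qed

lemma PM: "s \<in> I \<Longrightarrow> x \<in> space SE \<Longrightarrow> borel_measurable (P s x) = borel_measurable M"
  by (rule measurable_cong_sets) (auto simp: P_sets)

lemma markov_ext:
  fixes Hf G :: "'w \<Rightarrow> ennreal"
  assumes I: "s \<in> I" "u \<in> I" "t \<in> I" "s \<le> u" "u \<le> t" and x: "x \<in> space SE"
    and Hm: "Hf \<in> borel_measurable (F s u)" and Gm: "G \<in> borel_measurable (F u t)"
  shows "(\<integral>\<^sup>+\<omega>. Hf \<omega> * G \<omega> \<partial>P s x) = (\<integral>\<^sup>+\<omega>. Hf \<omega> * (\<integral>\<^sup>+\<omega>'. G \<omega>' \<partial>P u (X u \<omega>)) \<partial>P s x)"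
  using Hm
proof (induction rule: borel_measurable_induct)
  have sub1: "subalgebra M (F s u)" using I F_sub by auto
  have sub2: "subalgebra M (F u t)" using I F_sub by auto
  have GM[measurable]: "G \<in> borel_measurable M" using measurable_from_subalg[OF sub2 Gm] .
  have gM[measurable]: "(\<lambda>\<omega>. \<integral>\<^sup>+\<omega>'. G \<omega>' \<partial>P u (X u \<omega>)) \<in> borel_measurable M"
    using measurable_compose[OF X_meas[OF I(2)] EP_meas[OF I(2) GM]] by (simp add: comp_def)
  have sp: "space (P s x) = space M" using P_space I x by auto
  have PMx: "borel_measurable (P s x) = borel_measurable M" using PM I x by auto
  case (cong f g)
  have "f \<in> borel_measurable M" "g \<in> borel_measurable M" using cong sub1 measurable_from_subalg by blast+
  have sp2: "space (F s u) = space M" using sub1 unfolding subalgebra_def by auto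
  have 1: "(\<integral>\<^sup>+\<omega>. f \<omega> * G \<omega> \<partial>P s x) = (\<integral>\<^sup>+\<omega>. g \<omega> * G \<omega> \<partial>P s x)"
    by (rule nn_integral_cong) (use cong sp sp2 in auto)
  have 2: "(\<integral>\<^sup>+\<omega>. f \<omega> * (\<integral>\<^sup>+\<omega>'. G \<omega>' \<partial>P u (X u \<omega>)) \<partial>P s x) = (\<integral>\<^sup>+\<omega>. g \<omega> * (\<integral>\<^sup>+\<omega>'. G \<omega>' \<partial>P u (X u \<omega>)) \<partial>P s x)"
    by (rule nn_integral_cong) (use cong sp sp2 in auto)
  show ?case using 1 2 cong by simp
next
  case (set A)
  show ?case using markov[OF I(1,2,3) x set Gm I(4,5)] .
next
  have sub1: "subalgebra M (F s u)" using I F_sub by auto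
  have sub2: "subalgebra M (F u t)" using I F_sub by auto
  have GM[measurable]: "G \<in> borel_measurable M" using measurable_from_subalg[OF sub2 Gm] .
  have gM[measurable]: "(\<lambda>\<omega>. \<integral>\<^sup>+\<omega>'. G \<omega>' \<partial>P u (X u \<omega>)) \<in> borel_measurable M"
    using measurable_compose[OF X_meas[OF I(2)] EP_meas[OF I(2) GM]] by (simp add: comp_def)
  have PMx: "borel_measurable (P s x) = borel_measurable M" using PM I x by auto
  case (mult v c)
  have [measurable]: "v \<in> borel_measurable M" using mult sub1 measurable_from_subalg by blast
  have "(\<integral>\<^sup>+\<omega>. c * v \<omega> * G \<omega> \<partial>P s x) = c * (\<integral>\<^sup>+\<omega>. v \<omega> * G \<omega> \<partial>P s x)"
    by (subst nn_integral_cmult[symmetric]) (auto simp: PMx mult.assoc)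
  moreover have "(\<integral>\<^sup>+\<omega>. c * v \<omega> * (\<integral>\<^sup>+\<omega>'. G \<omega>' \<partial>P u (X u \<omega>)) \<partial>P s x) = c * (\<integral>\<^sup>+\<omega>. v \<omega> * (\<integral>\<^sup>+\<omega>'. G \<omega>' \<partial>P u (X u \<omega>)) \<partial>P s x)"
    by (subst nn_integral_cmult[symmetric]) (auto simp: PMx mult.assoc)
  ultimately show ?case using mult by simp
next
  have sub1: "subalgebra M (F s u)" using I F_sub by auto
  have sub2: "subalgebra M (F u t)" using I F_sub by auto
  have GM[measurable]: "G \<in> borel_measurable M" using measurable_from_subalg[OF sub2 Gm] .
  have gM[measurable]: "(\<lambda>\<omega>. \<integral>\<^sup>+\<omega>'. G \<omega>' \<partial>P u (X u \<omega>)) \<in> borel_measurable M"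
    using measurable_compose[OF X_meas[OF I(2)] EP_meas[OF I(2) GM]] by (simp add: comp_def)
  have PMx: "borel_measurable (P s x) = borel_measurable M" using PM I x by auto
  case (add v w)
  have [measurable]: "v \<in> borel_measurable M" "w \<in> borel_measurable M" using add sub1 measurable_from_subalg by blast+
  have "(\<integral>\<^sup>+\<omega>. (w \<omega> + v \<omega>) * G \<omega> \<partial>P s x) = (\<integral>\<^sup>+\<omega>. w \<omega> * G \<omega> \<partial>P s x) + (\<integral>\<^sup>+\<omega>. v \<omega> * G \<omega> \<partial>P s x)"
    by (subst nn_integral_add[symmetric]) (auto simp: PMx distrib_right)
  moreover have "(\<integral>\<^sup>+\<omega>. (w \<omega> + v \<omega>) * (\<integral>\<^sup>+\<omega>'. G \<omega>' \<partial>P u (X u \<omega>)) \<partial>P s x) = (\<integral>\<^sup>+\<omega>. w \<omega> * (\<integral>\<^sup>+\<omega>'. G \<omega>' \<partial>P u (X u \<omega>)) \<partial>P s x) + (\<integral>\<^sup>+\<omega>. v \<omega> * (\<integral>\<^sup>+\<omega>'. G \<omega>' \<partial>P u (X u \<omega>)) \<partial>P s x)"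
    by (subst nn_integral_add[symmetric]) (auto simp: PMx distrib_right)
  ultimately show ?case using add by simp
next
  have sub1: "subalgebra M (F s u)" using I F_sub by auto
  have sub2: "subalgebra M (F u t)" using I F_sub by auto
  have GM[measurable]: "G \<in> borel_measurable M" using measurable_from_subalg[OF sub2 Gm] .
  have gM[measurable]: "(\<lambda>\<omega>. \<integral>\<^sup>+\<omega>'. G \<omega>' \<partial>P u (X u \<omega>)) \<in> borel_measurable M"
    using measurable_compose[OF X_meas[OF I(2)] EP_meas[OF I(2) GM]] by (simp add: comp_def)
  have PMx: "borel_measurable (P s x) = borel_measurable M" using PM I x by auto
  case (seq U)
  have [measurable]: "\<And>i. U i \<in> borel_measurable M" using seq sub1 measurable_from_subalg by blast
  have inc: "incseq U" using seq by blast
  have inc2: "\<And>i j \<omega>. i \<le> j \<Longrightarrow> U i \<omega> \<le> U j \<omega>" using inc by (simp add: incseq_def le_fun_def)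
  have "(\<integral>\<^sup>+\<omega>. (SUP i. U i) \<omega> * G \<omega> \<partial>P s x) = (\<integral>\<^sup>+\<omega>. (SUP i. U i \<omega> * G \<omega>) \<partial>P s x)"
    by (simp add: SUP_mult_right_ennreal image_comp)
  also have "\<dots> = (SUP i. \<integral>\<^sup>+\<omega>. U i \<omega> * G \<omega> \<partial>P s x)"
    by (rule nn_integral_monotone_convergence_SUP)
       (auto simp: PMx incseq_def le_fun_def intro!: mult_right_mono inc2)
  finally have 1: "(\<integral>\<^sup>+\<omega>. (SUP i. U i) \<omega> * G \<omega> \<partial>P s x) = (SUP i. \<integral>\<^sup>+\<omega>. U i \<omega> * G \<omega> \<partial>P s x)" .
  have "(\<integral>\<^sup>+\<omega>. (SUP i. U i) \<omega> * (\<integral>\<^sup>+\<omega>'. G \<omega>' \<partial>P u (X u \<omega>)) \<partial>P s x) = (\<integral>\<^sup>+\<omega>. (SUP i. U i \<omega> * (\<integral>\<^sup>+\<omega>'. G \<omega>' \<partial>P u (X u \<omega>))) \<partial>P s x)"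
    by (simp add: SUP_mult_right_ennreal image_comp)
  also have "\<dots> = (SUP i. \<integral>\<^sup>+\<omega>. U i \<omega> * (\<integral>\<^sup>+\<omega>'. G \<omega>' \<partial>P u (X u \<omega>)) \<partial>P s x)"
    by (rule nn_integral_monotone_convergence_SUP)
       (auto simp: PMx incseq_def le_fun_def intro!: mult_right_mono inc2)
  finally show ?case using 1 seq by simp
qed

end

context pmk begin

definition Kk :: "real \<Rightarrow> real \<Rightarrow> real \<Rightarrow> 'e \<Rightarrow> 'e measure" where
  "Kk s t T x = distr (density (P s x) (\<lambda>\<omega>. ennreal (Z s T \<omega>) / H s T x)) SE (X t)"

lemma Kk_sets: "sets (Kk s t T x) = sets SE" unfolding Kk_def by simp

lemma Kk_space: "space (Kk s t T x) = space SE" unfolding Kk_def by simp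

lemma Kop_meas:
  assumes I: "s \<in> I" "t \<in> I" "T \<in> I" "s \<le> t" "t \<le> T" and g: "g \<in> borel_measurable SE"
  shows "Kop X P Z s t T g \<in> borel_measurable SE"
proof -
  have [measurable]: "Z s T \<in> borel_measurable M" using I by (intro Z_meas) auto
  have [measurable]: "X t \<in> measurable M SE" using I by (intro X_meas) auto
  have [measurable]: "H s T \<in> borel_measurable SE" using I by (intro H_meas) auto
  have [measurable]: "(\<lambda>x. \<integral>\<^sup>+\<omega>. g (X t \<omega>) * ennreal (Z s T \<omega>) \<partial>P s x) \<in> borel_measurable SE"
    using I g by (intro EP_meas) auto
  show ?thesis unfolding Kop_def H_def[symmetric] by measurable
qed

lemma Kk_nn:
  assumes I: "s \<in> I" "t \<in> I" "T \<in> I" "s \<le> t" "t \<le> T" and x: "x \<in> space SE"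
    and g: "g \<in> borel_measurable SE"
  shows "(\<integral>\<^sup>+y. g y \<partial>Kk s t T x) = Kop X P Z s t T g x"
proof -
  have PMx: "borel_measurable (P s x) = borel_measurable M" using PM I x by auto
  have Xm: "X t \<in> measurable (P s x) SE"
    using X_meas[OF I(2)] measurable_cong_sets[OF P_sets[OF I(1) x] refl] by blast
  have Zm[measurable]: "Z s T \<in> borel_measurable M" using I by (intro Z_meas) auto
  have Xm'[measurable]: "X t \<in> measurable M SE" using I by (intro X_meas) auto
  have "(\<integral>\<^sup>+y. g y \<partial>Kk s t T x) = (\<integral>\<^sup>+\<omega>. g (X t \<omega>) \<partial>density (P s x) (\<lambda>\<omega>. ennreal (Z s T \<omega>) / H s T x))"
    unfolding Kk_def by (rule nn_integral_distr) (use Xm g in auto)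
  also have "\<dots> = (\<integral>\<^sup>+\<omega>. ennreal (Z s T \<omega>) / H s T x * g (X t \<omega>) \<partial>P s x)"
    by (rule nn_integral_density) (use g in \<open>auto simp: PMx\<close>)
  also have "\<dots> = (\<integral>\<^sup>+\<omega>. g (X t \<omega>) * ennreal (Z s T \<omega>) / H s T x \<partial>P s x)"
    by (metis ennreal_divide_times ennreal_times_divide mult.commute)
  also have "\<dots> = (\<integral>\<^sup>+\<omega>. g (X t \<omega>) * ennreal (Z s T \<omega>) \<partial>P s x) / H s T x"
    by (rule nn_integral_divide) (use g in \<open>auto simp: PMx\<close>)
  finally show ?thesis unfolding Kop_def H_def .
qed

lemma Kk_emeasure:
  assumes I: "s \<in> I" "t \<in> I" "T \<in> I" "s \<le> t" "t \<le> T" and x: "x \<in> space SE" and A: "A \<in> sets SE"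
  shows "emeasure (Kk s t T x) A = Kop X P Z s t T (indicator A) x"
  using Kk_nn[OF I x, of "indicator A"] A by (simp add: Kk_sets)

lemma Kk_prob:
  assumes I: "s \<in> I" "t \<in> I" "T \<in> I" "s \<le> t" "t \<le> T" and x: "x \<in> space SE"
  shows "prob_space (Kk s t T x)"
proof
  have sp: "space (P s x) = space M" using P_space I x by auto
  have "emeasure (Kk s t T x) (space SE) = Kop X P Z s t T (indicator (space SE)) x"
    by (rule Kk_emeasure[OF I x]) simp
  also have "\<dots> = H s T x / H s T x"
    unfolding Kop_def H_def
    by (rule arg_cong2[where f="(/)"], rule nn_integral_cong)
      (use measurable_space[OF X_meas[OF I(2)]] sp in auto)
  also have "\<dots> = 1" using H_pos[OF I(1,3) _ x] H_fin[OF I(1,3) _ x] I by simp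
  finally show "emeasure (Kk s t T x) (space (Kk s t T x)) = 1" by (simp add: Kk_space)
qed

lemma Kk_meas:
  assumes I: "s \<in> I" "t \<in> I" "T \<in> I" "s \<le> t" "t \<le> T"
  shows "Kk s t T \<in> measurable SE (prob_algebra SE)"
proof (rule measurable_prob_algebraI)
  show "\<And>x. x \<in> space SE \<Longrightarrow> prob_space (Kk s t T x)" using Kk_prob I by blast
  show "Kk s t T \<in> SE \<rightarrow>\<^sub>M subprob_algebra SE"
  proof (rule measurable_subprob_algebra)
    show "\<And>a. a \<in> space SE \<Longrightarrow> subprob_space (Kk s t T a)"
      using Kk_prob I prob_space_imp_subprob_space by blast
    show "\<And>a. a \<in> space SE \<Longrightarrow> sets (Kk s t T a) = sets SE" by (rule Kk_sets)
    fix A assume A: "A \<in> sets SE"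
    have "(\<lambda>a. emeasure (Kk s t T a) A) \<in> borel_measurable SE \<longleftrightarrow> Kop X P Z s t T (indicator A) \<in> borel_measurable SE"
      by (rule measurable_cong) (use Kk_emeasure[OF I _ A] in auto)
    then show "(\<lambda>a. emeasure (Kk s t T a) A) \<in> borel_measurable SE"
      using Kop_meas[OF I, of "indicator A"] A by simp
  qed
qed

end

context pmk begin

lemma comp_lemma:
  assumes I: "s \<in> I" "u \<in> I" "t \<in> I" "T \<in> I" "s \<le> u" "u \<le> t" "t \<le> T" and x: "x \<in> space SE"
    and f: "f \<in> borel_measurable SE"
  shows "(\<integral>\<^sup>+\<omega>. f (X t \<omega>) * ennreal (Z s T \<omega>) \<partial>P s x)
       = (\<integral>\<^sup>+\<omega>. Kop X P Z u t T f (X u \<omega>) * ennreal (Z s T \<omega>) \<partial>P s x)"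
proof -
  have sp: "space (P s x) = space M" using P_space I x by auto
  have E1: "\<And>\<omega>. ennreal (Z s T \<omega>) = ennreal (Z s u \<omega>) * ennreal (Z u T \<omega>)"
    using Z_mult[of s u T] Z_nonneg I by (simp add: ennreal_mult[symmetric])
  have [measurable]: "Z s u \<in> borel_measurable (F s u)" using I by (intro Z_measF) auto
  have [measurable]: "Z u T \<in> borel_measurable (F u T)" using I by (intro Z_measF) auto
  have [measurable]: "X t \<in> measurable (F u T) SE" using I by (intro X_measF) auto
  have [measurable]: "X u \<in> measurable (F s u) SE" using I by (intro X_measF) auto
  have [measurable]: "f \<in> borel_measurable SE" by (rule f)
  have Km[measurable]: "Kop X P Z u t T f \<in> borel_measurable SE" using I f by (intro Kop_meas) auto
  have Xu: "\<And>\<omega>. \<omega> \<in> space M \<Longrightarrow> X u \<omega> \<in> space SE" using measurable_space[OF X_meas[OF I(2)]] by blast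
  have "(\<integral>\<^sup>+\<omega>. f (X t \<omega>) * ennreal (Z s T \<omega>) \<partial>P s x)
      = (\<integral>\<^sup>+\<omega>. ennreal (Z s u \<omega>) * (f (X t \<omega>) * ennreal (Z u T \<omega>)) \<partial>P s x)"
    by (simp add: E1 ac_simps)
  also have "\<dots> = (\<integral>\<^sup>+\<omega>. ennreal (Z s u \<omega>) * (\<integral>\<^sup>+\<omega>'. f (X t \<omega>') * ennreal (Z u T \<omega>') \<partial>P u (X u \<omega>)) \<partial>P s x)"
    by (rule markov_ext[where t=T]) (use I x in \<open>auto\<close>)
  also have "\<dots> = (\<integral>\<^sup>+\<omega>. (ennreal (Z s u \<omega>) * Kop X P Z u t T f (X u \<omega>)) * (\<integral>\<^sup>+\<omega>'. ennreal (Z u T \<omega>') \<partial>P u (X u \<omega>)) \<partial>P s x)"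
  proof (rule nn_integral_cong)
    fix \<omega> assume "\<omega> \<in> space (P s x)"
    then have y: "X u \<omega> \<in> space SE" using sp Xu by auto
    have "Kop X P Z u t T f (X u \<omega>) * (\<integral>\<^sup>+\<omega>'. ennreal (Z u T \<omega>') \<partial>P u (X u \<omega>))
        = (\<integral>\<^sup>+\<omega>'. f (X t \<omega>') * ennreal (Z u T \<omega>') \<partial>P u (X u \<omega>))"
      unfolding Kop_def H_def[symmetric]
      using H_pos[OF I(2,4) _ y] H_fin[OF I(2,4) _ y] I
      by (simp add: ennreal_divide_times)
    then show "ennreal (Z s u \<omega>) * (\<integral>\<^sup>+\<omega>'. f (X t \<omega>') * ennreal (Z u T \<omega>') \<partial>P u (X u \<omega>))
      = (ennreal (Z s u \<omega>) * Kop X P Z u t T f (X u \<omega>)) * (\<integral>\<^sup>+\<omega>'. ennreal (Z u T \<omega>') \<partial>P u (X u \<omega>))"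
      by (simp add: mult.assoc)
  qed
  also have "\<dots> = (\<integral>\<^sup>+\<omega>. (ennreal (Z s u \<omega>) * Kop X P Z u t T f (X u \<omega>)) * ennreal (Z u T \<omega>) \<partial>P s x)"
    by (rule markov_ext[where t=T, symmetric]) (use I x in \<open>auto\<close>)
  also have "\<dots> = (\<integral>\<^sup>+\<omega>. Kop X P Z u t T f (X u \<omega>) * ennreal (Z s T \<omega>) \<partial>P s x)"
    by (simp add: E1 ac_simps)
  finally show ?thesis .
qed

lemma Kk_comp:
  assumes I: "s \<in> I" "u \<in> I" "t \<in> I" "T \<in> I" "s \<le> u" "u \<le> t" "t \<le> T" and x: "x \<in> space SE"
  shows "Kk s t T x = bind (Kk s u T x) (Kk u t T)"
proof (rule measure_eqI)
  have ne: "space (Kk s u T x) \<noteq> {}"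
    using Kk_prob[of s u T x] I x prob_space.not_empty by auto
  have Km: "Kk u t T \<in> measurable SE (subprob_algebra SE)"
    using Kk_meas[of u t T] I measurable_prob_algebraD by auto
  have Km': "Kk u t T \<in> measurable (Kk s u T x) (subprob_algebra SE)"
    using Km measurable_cong_sets[OF Kk_sets refl] by blast
  show "sets (Kk s t T x) = sets (bind (Kk s u T x) (Kk u t T))"
    by (subst sets_bind[OF _ ne]) (auto simp: Kk_sets Kk_space)
  fix A assume "A \<in> sets (Kk s t T x)"
  then have A: "A \<in> sets SE" by (simp add: Kk_sets)
  have "emeasure (bind (Kk s u T x) (Kk u t T)) A = (\<integral>\<^sup>+y. emeasure (Kk u t T y) A \<partial>Kk s u T x)"
    by (rule emeasure_bind[OF ne Km' A])
  also have "\<dots> = (\<integral>\<^sup>+y. Kop X P Z u t T (indicator A) y \<partial>Kk s u T x)"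
    by (rule nn_integral_cong) (use Kk_emeasure[OF _ _ _ _ _ _ A] I in \<open>auto simp: Kk_space\<close>)
  also have "\<dots> = Kop X P Z s u T (Kop X P Z u t T (indicator A)) x"
    by (rule Kk_nn) (use I x A Kop_meas[of u t T "indicator A"] in auto)
  also have "\<dots> = Kop X P Z s t T (indicator A) x"
  proof -
    have "(\<integral>\<^sup>+\<omega>. Kop X P Z u t T (indicator A) (X u \<omega>) * ennreal (Z s T \<omega>) \<partial>P s x)
        = (\<integral>\<^sup>+\<omega>. indicator A (X t \<omega>) * ennreal (Z s T \<omega>) \<partial>P s x)"
      by (rule comp_lemma[OF I x, symmetric]) (use A in auto)
    then show ?thesis
      unfolding Kop_def[of X P Z s u T "Kop X P Z u t T (indicator A)" x] Kop_def[of X P Z s t T "indicator A" x]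
      by simp
  qed
  also have "\<dots> = emeasure (Kk s t T x) A"
    using Kk_emeasure[OF _ _ _ _ _ x A] I by auto
  finally show "emeasure (Kk s t T x) A = emeasure (bind (Kk s u T x) (Kk u t T)) A" ..
qed

end


definition Sd :: "'e measure \<Rightarrow> 'e measure \<Rightarrow> 'e measure \<Rightarrow> real" where
  "Sd N a b = (SUP A\<in>sets N. measure a A - measure b A)"

lemma Sd_bdd:
  assumes "prob_space a" "prob_space b"
  shows "bdd_above ((\<lambda>A. measure a A - measure b A) ` sets N)"
        "bdd_below ((\<lambda>A. measure a A - measure b A) ` sets N)"
proof -
  interpret a: prob_space a by fact
  interpret b: prob_space b by fact
  have h1: "measure a A - measure b A \<le> 1" for A using a.prob_le_1[of A] measure_nonneg[of b A] by linarith
  have h2: "-1 \<le> measure a A - measure b A" for A using b.prob_le_1[of A] measure_nonneg[of a A] by linarith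
  show "bdd_above ((\<lambda>A. measure a A - measure b A) ` sets N)"
    by (rule bdd_aboveI[where M=1]) (use h1 in auto)
  show "bdd_below ((\<lambda>A. measure a A - measure b A) ` sets N)"
    by (rule bdd_belowI[where m="-1"]) (use h2 in auto)
qed

lemma Sd_le1:
  assumes "prob_space a" "prob_space b"
  shows "Sd N a b \<le> 1"
proof -
  interpret a: prob_space a by fact
  interpret b: prob_space b by fact
  have h1: "measure a A - measure b A \<le> 1" for A using a.prob_le_1[of A] measure_nonneg[of b A] by linarith
  show ?thesis unfolding Sd_def
    by (rule cSUP_least) (use h1 in auto)
qed

lemma Sd_ge0:
  assumes "prob_space a" "prob_space b"
  shows "0 \<le> Sd N a b"
proof -
  have "measure a {} - measure b {} \<le> Sd N a b"
    unfolding Sd_def by (rule cSUP_upper[OF _ Sd_bdd(1)[OF assms]]) simp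
  then show ?thesis by simp
qed

lemma tv_Sd:
  assumes a: "prob_space a" "sets a = sets N" and b: "prob_space b" "sets b = sets N"
  shows "tv_norm N a b = 2 * Sd N a b"
proof -
  interpret a: prob_space a by fact
  interpret b: prob_space b by fact
  define f where "f A = measure a A - measure b A" for A
  have sa: "space a = space N" "space b = space N" using a b sets_eq_imp_space_eq by blast+
  have compl: "f (space N - A) = - f A" if "A \<in> sets N" for A
  proof -
    have "measure a (space N - A) = 1 - measure a A"
      using a.prob_compl[of A] that a sa by simp
    moreover have "measure b (space N - A) = 1 - measure b A"
      using b.prob_compl[of A] that b sa by simp
    ultimately show ?thesis unfolding f_def by simp
  qed
  have bA: "bdd_above (f ` sets N)" and bB: "bdd_below (f ` sets N)"
    using Sd_bdd[OF a(1) b(1)] unfolding f_def by auto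
  have ne: "sets N \<noteq> {}" by auto
  have "(INF A\<in>sets N. f A) = - (SUP A\<in>sets N. f A)"
  proof (rule antisym)
    show "(INF A\<in>sets N. f A) \<le> - (SUP A\<in>sets N. f A)"
    proof -
      have "(SUP A\<in>sets N. f A) \<le> - (INF A\<in>sets N. f A)"
      proof (rule cSUP_least[OF ne])
        fix A assume A: "A \<in> sets N"
        have "(INF A\<in>sets N. f A) \<le> f (space N - A)" by (rule cINF_lower[OF bB]) (use A in auto)
        then show "f A \<le> - (INF A\<in>sets N. f A)" using compl[OF A] by simp
      qed
      then show ?thesis by simp
    qed
    show "- (SUP A\<in>sets N. f A) \<le> (INF A\<in>sets N. f A)"
    proof (rule cINF_greatest[OF ne])
      fix A assume A: "A \<in> sets N"
      have "f (space N - A) \<le> (SUP A\<in>sets N. f A)" by (rule cSUP_upper[OF _ bA]) (use A in auto)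
      then show "- (SUP A\<in>sets N. f A) \<le> f A" using compl[OF A] by simp
    qed
  qed
  then show ?thesis unfolding tv_norm_def Sd_def f_def by simp
qed

lemma int_mono_on:
  fixes \<phi> :: "'a \<Rightarrow> real"
  assumes fa: "finite_measure \<mu>a" and fb: "finite_measure \<mu>b"
    and sa: "sets \<mu>a = sets N" and sb: "sets \<mu>b = sets N" and B: "B \<in> sets N"
    and le: "\<forall>X\<in>sets N. X \<subseteq> B \<longrightarrow> emeasure \<mu>a X \<le> emeasure \<mu>b X"
    and \<phi>: "\<phi> \<in> borel_measurable N" and bnd: "\<forall>x\<in>space N. 0 \<le> \<phi> x \<and> \<phi> x \<le> c"
  shows "(\<integral>x. \<phi> x * indicator B x \<partial>\<mu>a) \<le> (\<integral>x. \<phi> x * indicator B x \<partial>\<mu>b)"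
proof -
  interpret a: finite_measure \<mu>a by fact
  interpret b: finite_measure \<mu>b by fact
  have spa: "space \<mu>a = space N" and spb: "space \<mu>b = space N" using sa sb sets_eq_imp_space_eq by blast+
  have ma: "borel_measurable \<mu>a = borel_measurable N" by (rule measurable_cong_sets) (auto simp: sa)
  have mb: "borel_measurable \<mu>b = borel_measurable N" by (rule measurable_cong_sets) (auto simp: sb)
  have [measurable]: "\<phi> \<in> borel_measurable N" "B \<in> sets N" using \<phi> B by auto
  have Bm: "(\<lambda>x. \<phi> x * indicator B x) \<in> borel_measurable N" by measurable
  have ee: "ennreal (\<phi> x * indicator B x) = indicator B x * ennreal (\<phi> x)" for x
    by (auto simp: indicator_def)
  have dle: "density \<mu>a (indicator B) \<le> density \<mu>b (indicator B)"
  proof (subst le_measure)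
    show "sets (density \<mu>a (indicator B)) = sets (density \<mu>b (indicator B))" using sa sb by simp
    show "\<forall>A\<in>sets (density \<mu>a (indicator B)). emeasure (density \<mu>a (indicator B)) A \<le> emeasure (density \<mu>b (indicator B)) A"
    proof
      fix A assume "A \<in> sets (density \<mu>a (indicator B))"
      then have A: "A \<in> sets N" using sa by simp
      have "emeasure (density \<mu>a (indicator B)) A = emeasure \<mu>a (B \<inter> A)"
        by (rule emeasure_restricted) (use A B sa in auto)
      also have "\<dots> \<le> emeasure \<mu>b (B \<inter> A)" using le A B by auto
      also have "\<dots> = emeasure (density \<mu>b (indicator B)) A"
        by (rule emeasure_restricted[symmetric]) (use A B sb in auto)
      finally show "emeasure (density \<mu>a (indicator B)) A \<le> emeasure (density \<mu>b (indicator B)) A" .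
    qed
  qed
  have "(\<integral>\<^sup>+x. ennreal (\<phi> x * indicator B x) \<partial>\<mu>a) = (\<integral>\<^sup>+x. ennreal (\<phi> x) \<partial>density \<mu>a (indicator B))"
    unfolding ee by (rule nn_integral_density[symmetric]) (use \<phi> B sa in \<open>auto simp: ma\<close>)
  also have "\<dots> \<le> (\<integral>\<^sup>+x. ennreal (\<phi> x) \<partial>density \<mu>b (indicator B))"
    by (rule nn_integral_mono_measure[OF _ dle]) (use sa sb in simp)
  also have "\<dots> = (\<integral>\<^sup>+x. ennreal (\<phi> x * indicator B x) \<partial>\<mu>b)"
    unfolding ee by (rule nn_integral_density) (use \<phi> B sb in \<open>auto simp: mb\<close>)
  finally have nn: "(\<integral>\<^sup>+x. ennreal (\<phi> x * indicator B x) \<partial>\<mu>a) \<le> (\<integral>\<^sup>+x. ennreal (\<phi> x * indicator B x) \<partial>\<mu>b)" .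
  have "(\<integral>\<^sup>+x. ennreal (\<phi> x * indicator B x) \<partial>\<mu>b) \<le> (\<integral>\<^sup>+x. ennreal c \<partial>\<mu>b)"
    by (rule nn_integral_mono) (use bnd spb in \<open>auto simp: indicator_def\<close>)
  also have "\<dots> < \<infinity>"
  proof -
    have fe: "emeasure \<mu>b (space \<mu>b) < \<top>" using b.emeasure_finite[of "space \<mu>b"] using top.not_eq_extremum by blast
    then show ?thesis by (simp add: ennreal_mult_less_top)
  qed
  finally have fin: "(\<integral>\<^sup>+x. ennreal (\<phi> x * indicator B x) \<partial>\<mu>b) < \<infinity>" .
  have "(\<integral>x. \<phi> x * indicator B x \<partial>\<mu>a) = enn2real (\<integral>\<^sup>+x. ennreal (\<phi> x * indicator B x) \<partial>\<mu>a)"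
    by (rule integral_eq_nn_integral) (use bnd spa Bm in \<open>auto simp: ma indicator_def\<close>)
  also have "\<dots> \<le> enn2real (\<integral>\<^sup>+x. ennreal (\<phi> x * indicator B x) \<partial>\<mu>b)"
    using nn fin by (intro enn2real_mono) auto
  also have "\<dots> = (\<integral>x. \<phi> x * indicator B x \<partial>\<mu>b)"
    by (rule integral_eq_nn_integral[symmetric]) (use bnd spb Bm in \<open>auto simp: mb indicator_def\<close>)
  finally show ?thesis .
qed

lemma intg:
  fixes f :: "'a \<Rightarrow> real"
  assumes "finite_measure \<nu>" "sets \<nu> = sets N" "f \<in> borel_measurable N" "\<forall>x\<in>space N. \<bar>f x\<bar> \<le> C"
  shows "integrable \<nu> f"
proof -
  interpret finite_measure \<nu> by fact
  have sp: "space \<nu> = space N" using assms(2) sets_eq_imp_space_eq by blast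
  have m: "f \<in> borel_measurable \<nu>" using assms(2,3) measurable_cong_sets by blast
  show ?thesis by (rule integrable_const_bound[where B=C]) (use assms(4) sp m in auto)
qed

lemma measure_bind_int:
  assumes n: "prob_space \<nu>" "sets \<nu> = sets N" and K: "K \<in> measurable N (prob_algebra N)" and A: "A \<in> sets N"
  shows "measure (bind \<nu> K) A = (\<integral>x. measure (K x) A \<partial>\<nu>)"
proof -
  have sp: "space \<nu> = space N" using n(2) sets_eq_imp_space_eq by blast
  have Kx: "x \<in> space N \<Longrightarrow> prob_space (K x) \<and> sets (K x) = sets N" for x
    using measurable_space[OF K] by (auto simp: space_prob_algebra)
  have km: "(\<lambda>x. measure (K x) A) \<in> borel_measurable N"
    using measurable_compose[OF K measurable_measure_prob_algebra[OF A]] by (simp add: comp_def)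
  have km': "(\<lambda>x. measure (K x) A) \<in> borel_measurable \<nu>" using km n(2) measurable_cong_sets by blast
  have "emeasure (bind \<nu> K) A = (\<integral>\<^sup>+x. emeasure (K x) A \<partial>\<nu>)"
    by (rule emeasure_bind_prob_algebra[OF _ K A]) (use n in \<open>auto simp: space_prob_algebra\<close>)
  also have "\<dots> = (\<integral>\<^sup>+x. ennreal (measure (K x) A) \<partial>\<nu>)"
    by (rule nn_integral_cong) (use Kx sp in \<open>auto simp: prob_space_def finite_measure.emeasure_eq_measure\<close>)
  finally have e: "emeasure (bind \<nu> K) A = (\<integral>\<^sup>+x. ennreal (measure (K x) A) \<partial>\<nu>)" .
  have "(\<integral>x. measure (K x) A \<partial>\<nu>) = enn2real (\<integral>\<^sup>+x. ennreal (measure (K x) A) \<partial>\<nu>)"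
    by (rule integral_eq_nn_integral) (use km' in auto)
  then show ?thesis using e by (simp add: measure_def)
qed

lemma osc_int:
  fixes k :: "'a \<Rightarrow> real"
  assumes n1: "prob_space \<nu>1" "sets \<nu>1 = sets N" and n2: "prob_space \<nu>2" "sets \<nu>2 = sets N"
    and km: "k \<in> borel_measurable N" and bnd: "\<forall>x\<in>space N. \<bar>k x\<bar> \<le> C"
    and osc: "\<forall>x\<in>space N. \<forall>y\<in>space N. k x - k y \<le> \<delta>"
  shows "(\<integral>x. k x \<partial>\<nu>1) - (\<integral>x. k x \<partial>\<nu>2) \<le> \<delta> * Sd N \<nu>1 \<nu>2"
proof -
  interpret p1: prob_space \<nu>1 by fact
  interpret p2: prob_space \<nu>2 by fact
  have sp1: "space \<nu>1 = space N" using n1(2) sets_eq_imp_space_eq by blast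
  have sp2: "space \<nu>2 = space N" using n2(2) sets_eq_imp_space_eq by blast
  have ne: "space N \<noteq> {}" using p1.not_empty sp1 by simp
  have [measurable]: "k \<in> borel_measurable N" by (rule km)
  have f1: "finite_measure \<nu>1" "finite_measure \<nu>2" by unfold_locales
  define m0 where "m0 = (INF x\<in>space N. k x)"
  have bb: "bdd_below (k ` space N)" by (rule bdd_belowI[where m="-C"]) (use bnd in force)
  have g0: "0 \<le> k x - m0" if "x \<in> space N" for x
    unfolding m0_def using cINF_lower[OF bb that] by simp
  have g1: "k x - m0 \<le> \<delta>" if x: "x \<in> space N" for x
  proof -
    have "k x - \<delta> \<le> m0" unfolding m0_def
      by (rule cINF_greatest[OF ne]) (use osc x in force)
    then show ?thesis by simp
  qed
  have d0: "0 \<le> \<delta>" using g0 g1 ne by force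
  define g where "g x = k x - m0" for x
  have [measurable]: "g \<in> borel_measurable N" unfolding g_def by measurable
  obtain Y where Y: "Y \<in> sets \<nu>1" "\<forall>X\<in>sets \<nu>1. X \<subseteq> Y \<longrightarrow> emeasure \<nu>2 X \<le> emeasure \<nu>1 X"
      "\<forall>X\<in>sets \<nu>1. X \<inter> Y = {} \<longrightarrow> emeasure \<nu>1 X \<le> emeasure \<nu>2 X"
    using finite_unsigned_Hahn_decomposition[OF f1(1) f1(2)] n1 n2 by auto
  have YN[measurable]: "Y \<in> sets N" using Y n1 by simp
  define Yc where "Yc = space N - Y"
  have YcN[measurable]: "Yc \<in> sets N" unfolding Yc_def by auto
  have bg: "\<forall>x\<in>space N. \<bar>g x\<bar> \<le> \<delta>" using g0 g1 unfolding g_def by force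
  have I1: "integrable \<nu> g" "integrable \<nu> (\<lambda>x. g x * indicator Y x)" "integrable \<nu> (\<lambda>x. g x * indicator Yc x)"
    "integrable \<nu> (\<lambda>x. (\<delta> - g x) * indicator Y x)" "integrable \<nu> (\<lambda>x. \<delta> * indicator Y x)"
    "integrable \<nu> k"
    if "\<nu> = \<nu>1 \<or> \<nu> = \<nu>2" for \<nu>
  proof -
    have fm: "finite_measure \<nu>" "sets \<nu> = sets N" using that f1 n1 n2 by auto
    show "integrable \<nu> g" by (rule intg[OF fm _ bg]) measurable
    show "integrable \<nu> (\<lambda>x. g x * indicator Y x)" by (rule intg[OF fm, where C=\<delta>]) (measurable, use bg d0 in \<open>auto simp: indicator_def\<close>)
    show "integrable \<nu> (\<lambda>x. g x * indicator Yc x)" by (rule intg[OF fm, where C=\<delta>]) (measurable, use bg d0 in \<open>auto simp: indicator_def\<close>)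
    show "integrable \<nu> (\<lambda>x. (\<delta> - g x) * indicator Y x)" by (rule intg[OF fm, where C=\<delta>]) (measurable, use g0 g1 d0 in \<open>auto simp: indicator_def g_def\<close>)
    show "integrable \<nu> (\<lambda>x. \<delta> * indicator Y x)" by (rule intg[OF fm, where C=\<delta>]) (measurable, use d0 in \<open>auto simp: indicator_def\<close>)
    show "integrable \<nu> k" by (rule intg[OF fm km bnd])
  qed
  have split: "(\<integral>x. g x \<partial>\<nu>) = (\<integral>x. g x * indicator Y x \<partial>\<nu>) + (\<integral>x. g x * indicator Yc x \<partial>\<nu>)"
    if "\<nu> = \<nu>1 \<or> \<nu> = \<nu>2" for \<nu>
  proof -
    have sp: "space \<nu> = space N" using that sp1 sp2 by auto
    have "(\<integral>x. g x \<partial>\<nu>) = (\<integral>x. g x * indicator Y x + g x * indicator Yc x \<partial>\<nu>)"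
      by (rule Bochner_Integration.integral_cong) (auto simp: sp Yc_def indicator_def)
    also have "\<dots> = (\<integral>x. g x * indicator Y x \<partial>\<nu>) + (\<integral>x. g x * indicator Yc x \<partial>\<nu>)"
      by (rule Bochner_Integration.integral_add) (use I1[OF that] in auto)
    finally show ?thesis .
  qed
  have kg: "(\<integral>x. k x \<partial>\<nu>) = (\<integral>x. g x \<partial>\<nu>) + m0" if "\<nu> = \<nu>1 \<or> \<nu> = \<nu>2" for \<nu>
  proof -
    have ps: "prob_space \<nu>" using that n1 n2 by auto
    have "(\<integral>x. g x \<partial>\<nu>) = (\<integral>x. k x \<partial>\<nu>) - (\<integral>x. m0 \<partial>\<nu>)"
      unfolding g_def by (rule Bochner_Integration.integral_diff) (use I1[OF that] finite_measure.integrable_const[of \<nu> m0] that f1 in auto)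
    then show ?thesis using prob_space.prob_space[OF ps] by (simp add: measure_def)
  qed
  have dg: "(\<integral>x. (\<delta> - g x) * indicator Y x \<partial>\<nu>) = \<delta> * measure \<nu> Y - (\<integral>x. g x * indicator Y x \<partial>\<nu>)"
    if "\<nu> = \<nu>1 \<or> \<nu> = \<nu>2" for \<nu>
  proof -
    have YY: "Y \<in> sets \<nu>" using that n1 n2 YN by auto
    have fm: "finite_measure \<nu>" using that f1 by auto
    have "(\<integral>x. (\<delta> - g x) * indicator Y x \<partial>\<nu>) = (\<integral>x. \<delta> * indicator Y x - g x * indicator Y x \<partial>\<nu>)"
      by (simp add: left_diff_distrib)
    also have "\<dots> = (\<integral>x. \<delta> * indicator Y x \<partial>\<nu>) - (\<integral>x. g x * indicator Y x \<partial>\<nu>)"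
      by (rule Bochner_Integration.integral_diff) (use I1[OF that] in auto)
    also have "(\<integral>x. \<delta> * indicator Y x \<partial>\<nu>) = \<delta> * measure \<nu> Y"
      using YY fm by (simp add: finite_measure.emeasure_finite)
    finally show ?thesis .
  qed
  have ca: "(\<integral>x. g x * indicator Yc x \<partial>\<nu>1) \<le> (\<integral>x. g x * indicator Yc x \<partial>\<nu>2)"
  proof (rule int_mono_on[OF f1(1) f1(2) n1(2) n2(2) YcN])
    show "\<forall>X\<in>sets N. X \<subseteq> Yc \<longrightarrow> emeasure \<nu>1 X \<le> emeasure \<nu>2 X"
      using Y(3) n1 unfolding Yc_def by auto
    show "g \<in> borel_measurable N" by measurable
    show "\<forall>x\<in>space N. 0 \<le> g x \<and> g x \<le> \<delta>" using g0 g1 unfolding g_def by auto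
  qed
  have cb: "(\<integral>x. (\<delta> - g x) * indicator Y x \<partial>\<nu>2) \<le> (\<integral>x. (\<delta> - g x) * indicator Y x \<partial>\<nu>1)"
  proof (rule int_mono_on[OF f1(2) f1(1) n2(2) n1(2) YN])
    show "\<forall>X\<in>sets N. X \<subseteq> Y \<longrightarrow> emeasure \<nu>2 X \<le> emeasure \<nu>1 X"
      using Y(2) n1 by auto
    show "(\<lambda>x. \<delta> - g x) \<in> borel_measurable N" by measurable
    show "\<forall>x\<in>space N. 0 \<le> \<delta> - g x \<and> \<delta> - g x \<le> \<delta>" using g0 g1 unfolding g_def by auto
  qed
  have SY: "measure \<nu>1 Y - measure \<nu>2 Y \<le> Sd N \<nu>1 \<nu>2"
    unfolding Sd_def by (rule cSUP_upper[OF YN Sd_bdd(1)[OF n1(1) n2(1)]])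
  have "(\<integral>x. k x \<partial>\<nu>1) - (\<integral>x. k x \<partial>\<nu>2)
      = ((\<integral>x. g x * indicator Y x \<partial>\<nu>1) - (\<integral>x. g x * indicator Y x \<partial>\<nu>2))
        + ((\<integral>x. g x * indicator Yc x \<partial>\<nu>1) - (\<integral>x. g x * indicator Yc x \<partial>\<nu>2))"
    using kg[of \<nu>1] kg[of \<nu>2] split[of \<nu>1] split[of \<nu>2] by simp
  also have "\<dots> \<le> \<delta> * (measure \<nu>1 Y - measure \<nu>2 Y)"
    using ca cb dg[of \<nu>1] dg[of \<nu>2] by (simp add: right_diff_distrib)
  also have "\<dots> \<le> \<delta> * Sd N \<nu>1 \<nu>2" using SY d0 by (rule mult_left_mono)
  finally show ?thesis .
qed

lemma contraction:
  assumes n1: "prob_space \<nu>1" "sets \<nu>1 = sets N" and n2: "prob_space \<nu>2" "sets \<nu>2 = sets N"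
    and K: "K \<in> measurable N (prob_algebra N)"
    and osc: "\<And>x y A. x \<in> space N \<Longrightarrow> y \<in> space N \<Longrightarrow> A \<in> sets N \<Longrightarrow> measure (K x) A - measure (K y) A \<le> \<delta>"
  shows "Sd N (bind \<nu>1 K) (bind \<nu>2 K) \<le> \<delta> * Sd N \<nu>1 \<nu>2"
  unfolding Sd_def[of N "bind \<nu>1 K"]
proof (rule cSUP_least)
  show "sets N \<noteq> {}" by auto
  fix A assume A: "A \<in> sets N"
  have Kx: "x \<in> space N \<Longrightarrow> prob_space (K x) \<and> sets (K x) = sets N" for x
    using measurable_space[OF K] by (auto simp: space_prob_algebra)
  have km: "(\<lambda>x. measure (K x) A) \<in> borel_measurable N"
    using measurable_compose[OF K measurable_measure_prob_algebra[OF A]] by (simp add: comp_def)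
  have bnd: "\<forall>x\<in>space N. \<bar>measure (K x) A\<bar> \<le> 1"
    using Kx by (auto simp: prob_space.prob_le_1)
  show "measure (bind \<nu>1 K) A - measure (bind \<nu>2 K) A \<le> \<delta> * Sd N \<nu>1 \<nu>2"
    unfolding measure_bind_int[OF n1 K A] measure_bind_int[OF n2 K A]
    by (rule osc_int[OF n1 n2 km bnd]) (use osc A in auto)
qed



lemma inv_anti: "(a::ennreal) \<le> b \<Longrightarrow> inverse b \<le> inverse a"
proof (cases "a = 0")
  case False
  assume ab: "a \<le> b"
  show ?thesis
  proof (cases "b = top")
    case False
    then obtain rb where rb: "b = ennreal rb" "0 \<le> rb" by (cases b) auto
    obtain ra where ra: "a = ennreal ra" "0 \<le> ra" using ab False by (cases a) (auto simp: top_unique)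
    have "0 < ra" using \<open>a \<noteq> 0\<close> ra by (auto intro: le_neq_trans)
    then have "ra \<le> rb" using ab ra rb by simp
    then show ?thesis using ra rb \<open>0 < ra\<close> by (simp add: inverse_ennreal le_imp_inverse_le)
  qed simp
qed simp

lemma measure_of_eqK:
  assumes "sets K = sets N" "\<And>A. A \<in> sets N \<Longrightarrow> f A = emeasure K A"
  shows "measure_of (space N) (sets N) f = K"
proof -
  have sp: "space K = space N" using assms(1) sets_eq_imp_space_eq by blast
  have "measure_of (space N) (sets N) f = measure_of (space N) (sets N) (emeasure K)"
    by (rule measure_of_eq) (auto simp: sets.sigma_sets_eq assms sets.space_closed)
  also have "\<dots> = K" using measure_of_of_measure[of K] assms(1) sp by simp
  finally show ?thesis .
qed

lemma min_measure_props:
  assumes fm: "finite_measure \<mu>" "finite_measure \<nu>" and s: "sets \<mu> = sets N" "sets \<nu> = sets N"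
  shows "sets (min_measure N \<mu> \<nu>) = sets N
    \<and> (\<forall>A\<in>sets N. emeasure (min_measure N \<mu> \<nu>) A \<le> emeasure \<mu> A \<and> emeasure (min_measure N \<mu> \<nu>) A \<le> emeasure \<nu> A)"
proof -
  define Pm where "Pm m \<longleftrightarrow> sets m = sets N
      \<and> (\<forall>A\<in>sets N. emeasure m A \<le> emeasure \<mu> A \<and> emeasure m A \<le> emeasure \<nu> A)
      \<and> (\<forall>m'. sets m' = sets N
           \<and> (\<forall>A\<in>sets N. emeasure m' A \<le> emeasure \<mu> A \<and> emeasure m' A \<le> emeasure \<nu> A)
           \<longrightarrow> (\<forall>A\<in>sets N. emeasure m' A \<le> emeasure m A))" for m
  obtain Y where Y: "Y \<in> sets \<mu>" "\<forall>X\<in>sets \<mu>. X \<subseteq> Y \<longrightarrow> emeasure \<nu> X \<le> emeasure \<mu> X"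
      "\<forall>X\<in>sets \<mu>. X \<inter> Y = {} \<longrightarrow> emeasure \<mu> X \<le> emeasure \<nu> X"
    using finite_unsigned_Hahn_decomposition[OF fm(1) fm(2)] s by auto
  have YN: "Y \<in> sets N" using Y s by simp
  define f where "f A = emeasure \<nu> (A \<inter> Y) + emeasure \<mu> (A - Y)" for A
  define m0 where "m0 = measure_of (space N) (sets N) f"
  have ca: "countably_additive (sets N) f"
    unfolding countably_additive_def
  proof (intro allI impI)
    fix A :: "nat \<Rightarrow> _" assume A: "range A \<subseteq> sets N" "disjoint_family A" "\<Union> (range A) \<in> sets N"
    have d1: "disjoint_family (\<lambda>i. A i \<inter> Y)" "disjoint_family (\<lambda>i. A i - Y)"
      using A(2) unfolding disjoint_family_on_def by auto
    have r1: "range (\<lambda>i. A i \<inter> Y) \<subseteq> sets \<nu>" "range (\<lambda>i. A i - Y) \<subseteq> sets \<mu>"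
      using A(1) YN s by auto
    have u: "(\<Union>i. A i \<inter> Y) = (\<Union> (range A)) \<inter> Y" "(\<Union>i. A i - Y) = (\<Union> (range A)) - Y" by auto
    have "(\<Sum>i. f (A i)) = (\<Sum>i. emeasure \<nu> (A i \<inter> Y)) + (\<Sum>i. emeasure \<mu> (A i - Y))"
      unfolding f_def by (simp add: suminf_add)
    also have "\<dots> = emeasure \<nu> (\<Union>i. A i \<inter> Y) + emeasure \<mu> (\<Union>i. A i - Y)"
      using suminf_emeasure[OF r1(1) d1(1)] suminf_emeasure[OF r1(2) d1(2)] by simp
    also have "\<dots> = f (\<Union> (range A))" unfolding f_def u by simp
    finally show "(\<Sum>i. f (A i)) = f (\<Union> (range A))" .
  qed
  have pos: "positive (sets N) f" unfolding positive_def f_def by simp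
  have sa: "sigma_algebra (space N) (sets N)" ..
  have em0: "emeasure m0 A = f A" if "A \<in> sets N" for A
    unfolding m0_def by (rule emeasure_measure_of_sigma[OF sa pos ca that])
  have sm0: "sets m0 = sets N" unfolding m0_def by simp
  have le1: "f A \<le> emeasure \<mu> A \<and> f A \<le> emeasure \<nu> A" if A: "A \<in> sets N" for A
  proof -
    have a1: "A \<inter> Y \<in> sets N" "A - Y \<in> sets N" using A YN by auto
    have uq: "A \<inter> Y \<union> (A - Y) = A" "A \<inter> Y \<inter> (A - Y) = {}" by auto
    have "emeasure \<nu> (A \<inter> Y) \<le> emeasure \<mu> (A \<inter> Y)" using Y(2) a1 s by auto
    then have "f A \<le> emeasure \<mu> (A \<inter> Y) + emeasure \<mu> (A - Y)" unfolding f_def by (rule add_right_mono)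
    also have "\<dots> = emeasure \<mu> A" using plus_emeasure[of "A \<inter> Y" \<mu> "A - Y"] a1 s uq by simp
    finally have 1: "f A \<le> emeasure \<mu> A" .
    have "emeasure \<mu> (A - Y) \<le> emeasure \<nu> (A - Y)" using Y(3) a1 s by auto
    then have "f A \<le> emeasure \<nu> (A \<inter> Y) + emeasure \<nu> (A - Y)" unfolding f_def by (rule add_left_mono)
    also have "\<dots> = emeasure \<nu> A" using plus_emeasure[of "A \<inter> Y" \<nu> "A - Y"] a1 s uq by simp
    finally show ?thesis using 1 by simp
  qed
  have maxm: "emeasure m' A \<le> f A" if m': "sets m' = sets N"
      "\<forall>A\<in>sets N. emeasure m' A \<le> emeasure \<mu> A \<and> emeasure m' A \<le> emeasure \<nu> A" and A: "A \<in> sets N" for m' A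
  proof -
    have a1: "A \<inter> Y \<in> sets N" "A - Y \<in> sets N" using A YN by auto
    have uq: "A \<inter> Y \<union> (A - Y) = A" "A \<inter> Y \<inter> (A - Y) = {}" by auto
    have "emeasure m' A = emeasure m' (A \<inter> Y) + emeasure m' (A - Y)"
      using plus_emeasure[of "A \<inter> Y" m' "A - Y"] a1 m'(1) uq by simp
    also have "\<dots> \<le> f A" unfolding f_def using m'(2) a1 by (intro add_mono) auto
    finally show ?thesis .
  qed
  have p2: "\<forall>A\<in>sets N. emeasure m0 A \<le> emeasure \<mu> A \<and> emeasure m0 A \<le> emeasure \<nu> A"
    using em0 le1 by simp
  have p3: "\<forall>m'. sets m' = sets N
           \<and> (\<forall>A\<in>sets N. emeasure m' A \<le> emeasure \<mu> A \<and> emeasure m' A \<le> emeasure \<nu> A)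
           \<longrightarrow> (\<forall>A\<in>sets N. emeasure m' A \<le> emeasure m0 A)"
  proof (intro allI impI ballI)
    fix m' A assume h: "sets m' = sets N
           \<and> (\<forall>A\<in>sets N. emeasure m' A \<le> emeasure \<mu> A \<and> emeasure m' A \<le> emeasure \<nu> A)" and A: "A \<in> sets N"
    show "emeasure m' A \<le> emeasure m0 A" unfolding em0[OF A] using maxm[OF h[THEN conjunct1] h[THEN conjunct2] A] .
  qed
  have P0: "Pm m0" unfolding Pm_def using sm0 p2 p3 by (intro conjI)
  have uniq: "m = m0" if "Pm m" for m
  proof (rule measure_eqI)
    have m1: "sets m = sets N \<and> (\<forall>A\<in>sets N. emeasure m A \<le> emeasure \<mu> A \<and> emeasure m A \<le> emeasure \<nu> A)
      \<and> (\<forall>m'. sets m' = sets N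
           \<and> (\<forall>A\<in>sets N. emeasure m' A \<le> emeasure \<mu> A \<and> emeasure m' A \<le> emeasure \<nu> A)
           \<longrightarrow> (\<forall>A\<in>sets N. emeasure m' A \<le> emeasure m A))" using that unfolding Pm_def .
    show "sets m = sets m0" using m1 sm0 by simp
    fix A assume "A \<in> sets m"
    then have A: "A \<in> sets N" using m1 by simp
    have "emeasure m A \<le> emeasure m0 A"
      using p3[rule_format, of m A] m1 A by blast
    moreover have "emeasure m0 A \<le> emeasure m A"
      using m1[THEN conjunct2, THEN conjunct2, rule_format, of m0 A] sm0 p2 A by blast
    ultimately show "emeasure m A = emeasure m0 A" by simp
  qed
  have th: "Pm (THE m. Pm m)" by (rule theI[of Pm m0, OF P0 uniq])
  have eq: "min_measure N \<mu> \<nu> = (THE m. Pm m)" unfolding min_measure_def Pm_def ..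
  have "Pm (min_measure N \<mu> \<nu>)" using th unfolding eq .
  then show ?thesis unfolding Pm_def by blast
qed


context pmk begin

lemma Emu_return:
  assumes "q \<in> I" "x \<in> space SE" "G \<in> borel_measurable M"
  shows "Emu P q (return SE x) G = (\<integral>\<^sup>+\<omega>. G \<omega> \<partial>P q x)"
  unfolding Emu_def by (rule nn_integral_return[OF assms(2) EP_meas[OF assms(1,3)]])

lemma Phi_return:
  assumes I: "q \<in> I" "r \<in> I" "q \<le> r" and x: "x \<in> space SE"
  shows "Phi SE X P Z q r (return SE x) = Kk q r r x"
  unfolding Phi_def
proof (rule measure_of_eqK)
  show "sets (Kk q r r x) = sets SE" by (rule Kk_sets)
  fix A assume A: "A \<in> sets SE"
  have [measurable]: "Z q r \<in> borel_measurable M" using I by (intro Z_meas) auto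
  have [measurable]: "X r \<in> measurable M SE" using I by (intro X_meas) auto
  have [measurable]: "A \<in> sets SE" by (rule A)
  have "Emu P q (return SE x) (\<lambda>\<omega>. indicator A (X r \<omega>) * ennreal (Z q r \<omega>)) / Emu P q (return SE x) (\<lambda>\<omega>. ennreal (Z q r \<omega>))
      = (\<integral>\<^sup>+\<omega>. indicator A (X r \<omega>) * ennreal (Z q r \<omega>) \<partial>P q x) / (\<integral>\<^sup>+\<omega>. ennreal (Z q r \<omega>) \<partial>P q x)"
    by (subst Emu_return[OF I(1) x], measurable)+
  also have "\<dots> = emeasure (Kk q r r x) A"
    using Kk_emeasure[OF I(1,2,2) I(3) order_refl x A] unfolding Kop_def by simp
  finally show "Emu P q (return SE x) (\<lambda>\<omega>. indicator A (X r \<omega>) * ennreal (Z q r \<omega>)) / Emu P q (return SE x) (\<lambda>\<omega>. ennreal (Z q r \<omega>))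
      = emeasure (Kk q r r x) A" .
qed

lemma muK_bind:
  assumes I: "s \<in> I" "t \<in> I" "T \<in> I" "s \<le> t" "t \<le> T" and mu: "prob_space \<mu>" "sets \<mu> = sets SE"
  shows "muK SE X P Z s t T \<mu> = bind \<mu> (Kk s t T)"
  unfolding muK_def
proof (rule measure_of_eqK)
  have mu': "\<mu> \<in> space (prob_algebra SE)" using mu by (simp add: space_prob_algebra)
  have Km: "Kk s t T \<in> SE \<rightarrow>\<^sub>M prob_algebra SE" using Kk_meas[OF I] .
  show "sets (bind \<mu> (Kk s t T)) = sets SE" by (rule sets_bind'[OF mu' Km])
  fix A assume A: "A \<in> sets SE"
  have sp: "space \<mu> = space SE" using mu(2) sets_eq_imp_space_eq by blast
  have "(\<integral>\<^sup>+x. Kop X P Z s t T (indicator A) x \<partial>\<mu>) = (\<integral>\<^sup>+x. emeasure (Kk s t T x) A \<partial>\<mu>)"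
    by (rule nn_integral_cong) (use Kk_emeasure[OF I _ A] sp in auto)
  also have "\<dots> = emeasure (bind \<mu> (Kk s t T)) A"
    by (rule emeasure_bind_prob_algebra[OF mu' Km A, symmetric])
  finally show "(\<integral>\<^sup>+x. Kop X P Z s t T (indicator A) x \<partial>\<mu>) = emeasure (bind \<mu> (Kk s t T)) A" .
qed

lemma Phi_bind:
  assumes I: "s \<in> I" "t \<in> I" "s \<le> t" and mu: "prob_space \<mu>" "sets \<mu> = sets SE"
  defines "c \<equiv> \<integral>\<^sup>+x. H s t x \<partial>\<mu>"
  shows "prob_space (density \<mu> (\<lambda>x. H s t x / c)) \<and> sets (density \<mu> (\<lambda>x. H s t x / c)) = sets SE
     \<and> Phi SE X P Z s t \<mu> = bind (density \<mu> (\<lambda>x. H s t x / c)) (Kk s t t)"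
proof -
  interpret p: prob_space \<mu> by fact
  have sp: "space \<mu> = space SE" using mu(2) sets_eq_imp_space_eq by blast
  have Hm: "H s t \<in> borel_measurable SE" using H_meas I by auto
  have Hm': "H s t \<in> borel_measurable \<mu>" using Hm mu(2) measurable_cong_sets by blast
  have c_fin: "c < \<infinity>"
  proof -
    have "c \<le> (\<integral>\<^sup>+x. Hs s t \<partial>\<mu>)" unfolding c_def
      by (rule nn_integral_mono) (use H_le sp in auto)
    also have "\<dots> = Hs s t" using p.emeasure_space_1 by simp
    also have "\<dots> < \<infinity>" using Hs_fin I by auto
    finally show ?thesis .
  qed
  have c_pos: "0 < c"
  proof (rule ccontr)
    assume "\<not> 0 < c"
    then have "c = 0" by (simp add: not_gr_zero)
    then have "AE x in \<mu>. H s t x = 0" unfolding c_def using nn_integral_0_iff_AE[OF Hm'] by simp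
    moreover have "AE x in \<mu>. x \<in> space \<mu>" by simp
    ultimately have "AE x in \<mu>. False" by eventually_elim (use H_pos I sp in force)
    then show False using p.AE_False by simp
  qed
  define \<mu>' where "\<mu>' = density \<mu> (\<lambda>x. H s t x / c)"
  have s': "sets \<mu>' = sets SE" unfolding \<mu>'_def using mu by simp
  have sp': "space \<mu>' = space SE" unfolding \<mu>'_def using sp by simp
  have p': "prob_space \<mu>'"
  proof (rule prob_spaceI)
    have "emeasure \<mu>' (space \<mu>') = (\<integral>\<^sup>+x. H s t x / c * indicator (space \<mu>) x \<partial>\<mu>)"
      unfolding \<mu>'_def space_density by (rule emeasure_density) (use Hm' in auto)
    also have "\<dots> = (\<integral>\<^sup>+x. H s t x / c \<partial>\<mu>)" by (rule nn_integral_cong) simp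
    also have "\<dots> = c / c" unfolding c_def by (rule nn_integral_divide[OF Hm'])
    also have "\<dots> = 1" using c_pos c_fin by simp
    finally show "emeasure \<mu>' (space \<mu>') = 1" .
  qed
  have mu'': "\<mu>' \<in> space (prob_algebra SE)" using p' s' by (simp add: space_prob_algebra)
  have Km: "Kk s t t \<in> SE \<rightarrow>\<^sub>M prob_algebra SE" using Kk_meas I by auto
  have "Phi SE X P Z s t \<mu> = bind \<mu>' (Kk s t t)"
    unfolding Phi_def
  proof (rule measure_of_eqK)
    show "sets (bind \<mu>' (Kk s t t)) = sets SE" by (rule sets_bind'[OF mu'' Km])
    fix A assume A: "A \<in> sets SE"
    have [measurable]: "Z s t \<in> borel_measurable M" using I by (intro Z_meas) auto
    have [measurable]: "X t \<in> measurable M SE" using I by (intro X_meas) auto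
    have [measurable]: "A \<in> sets SE" by (rule A)
    define E where "E x = (\<integral>\<^sup>+\<omega>. indicator A (X t \<omega>) * ennreal (Z s t \<omega>) \<partial>P s x)" for x
    have Em0: "E \<in> borel_measurable SE" unfolding E_def by (rule EP_meas[OF I(1)]) measurable
    have Em: "E \<in> borel_measurable \<mu>" using Em0 mu(2) measurable_cong_sets by blast
    have "emeasure (bind \<mu>' (Kk s t t)) A = (\<integral>\<^sup>+x. emeasure (Kk s t t x) A \<partial>\<mu>')"
      by (rule emeasure_bind_prob_algebra[OF mu'' Km A])
    also have "\<dots> = (\<integral>\<^sup>+x. E x / H s t x \<partial>\<mu>')"
      by (rule nn_integral_cong) (use Kk_emeasure[OF I(1,2,2,3) order_refl _ A] sp' in \<open>auto simp: Kop_def E_def H_def\<close>)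
    also have "\<dots> = (\<integral>\<^sup>+x. H s t x / c * (E x / H s t x) \<partial>\<mu>)"
      unfolding \<mu>'_def by (rule nn_integral_density) (use Hm' Em Hm in auto)
    also have "\<dots> = (\<integral>\<^sup>+x. E x / c \<partial>\<mu>)"
    proof (rule nn_integral_cong)
      fix x assume "x \<in> space \<mu>"
      then have x: "x \<in> space SE" using sp by simp
      have h0: "H s t x \<noteq> 0" "H s t x < \<infinity>" using H_pos[OF I(1,2,3) x] H_fin[OF I(1,2,3) x] by auto
      have "H s t x / c * (E x / H s t x) = (E x / H s t x) * H s t x / c"
        by (simp add: divide_ennreal_def ac_simps)
      also have "(E x / H s t x) * H s t x = E x" using h0 by (simp add: ennreal_divide_times)
      finally show "H s t x / c * (E x / H s t x) = E x / c" .
    qed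
    also have "\<dots> = (\<integral>\<^sup>+x. E x \<partial>\<mu>) / c" by (rule nn_integral_divide[OF Em])
    finally show "Emu P s \<mu> (\<lambda>\<omega>. indicator A (X t \<omega>) * ennreal (Z s t \<omega>)) / Emu P s \<mu> (\<lambda>\<omega>. ennreal (Z s t \<omega>))
        = emeasure (bind \<mu>' (Kk s t t)) A"
      unfolding Emu_def c_def E_def H_def by simp
  qed
  then show ?thesis using p' s' unfolding \<mu>'_def by simp
qed

end

context pmk begin

lemma KR:
  assumes I: "q \<in> I" "r \<in> I" "T \<in> I" "q \<le> r" "r \<le> T" and z: "z \<in> space SE" and B: "B \<in> sets SE"
  shows "emeasure (Kk q r T z) B = (\<integral>\<^sup>+v. H r T v * indicator B v \<partial>Kk q r r z) / (\<integral>\<^sup>+v. H r T v \<partial>Kk q r r z)"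
proof -
  have [measurable]: "Z q r \<in> borel_measurable (F q r)" using I by (intro Z_measF) auto
  have [measurable]: "Z r T \<in> borel_measurable (F r T)" using I by (intro Z_measF) auto
  have [measurable]: "X r \<in> measurable (F q r) SE" using I by (intro X_measF) auto
  have hm[measurable]: "H r T \<in> borel_measurable SE" using I by (intro H_meas) auto
  have E1: "\<And>\<omega>. ennreal (Z q T \<omega>) = ennreal (Z q r \<omega>) * ennreal (Z r T \<omega>)"
    using Z_mult[of q r T] Z_nonneg I by (simp add: ennreal_mult[symmetric])
  have Xr: "\<And>\<omega>. \<omega> \<in> space (P q z) \<Longrightarrow> X r \<omega> \<in> space SE"
    using measurable_space[OF X_meas[OF I(2)]] P_space[OF I(1) z] by blast
  have Hqr: "H q r z \<noteq> 0" "H q r z \<noteq> \<infinity>" "H q r z < \<infinity>" using H_pos[OF I(1,2,4) z] H_fin[OF I(1,2,4) z] by auto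
  have NB: "(\<integral>\<^sup>+\<omega>. indicator C (X r \<omega>) * ennreal (Z q T \<omega>) \<partial>P q z)
      = (\<integral>\<^sup>+v. H r T v * indicator C v \<partial>Kk q r r z) * H q r z" if C[measurable]: "C \<in> sets SE" for C
  proof -
    have "(\<integral>\<^sup>+\<omega>. indicator C (X r \<omega>) * ennreal (Z q T \<omega>) \<partial>P q z)
        = (\<integral>\<^sup>+\<omega>. (indicator C (X r \<omega>) * ennreal (Z q r \<omega>)) * ennreal (Z r T \<omega>) \<partial>P q z)"
      by (simp add: E1 ac_simps)
    also have "\<dots> = (\<integral>\<^sup>+\<omega>. (indicator C (X r \<omega>) * ennreal (Z q r \<omega>)) * (\<integral>\<^sup>+\<omega>'. ennreal (Z r T \<omega>') \<partial>P r (X r \<omega>)) \<partial>P q z)"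
      by (rule markov_ext[where t=T]) (use I z in auto)
    also have "\<dots> = (\<integral>\<^sup>+\<omega>. (H r T (X r \<omega>) * indicator C (X r \<omega>)) * ennreal (Z q r \<omega>) \<partial>P q z)"
      by (rule nn_integral_cong) (simp add: H_def ac_simps)
    also have "\<dots> = Kop X P Z q r r (\<lambda>v. H r T v * indicator C v) z * H q r z"
      unfolding Kop_def H_def[symmetric] using Hqr by (simp add: ennreal_divide_times)
    also have "Kop X P Z q r r (\<lambda>v. H r T v * indicator C v) z = (\<integral>\<^sup>+v. H r T v * indicator C v \<partial>Kk q r r z)"
      by (rule Kk_nn[symmetric]) (use I z in auto)
    finally show ?thesis .
  qed
  have "emeasure (Kk q r T z) B = (\<integral>\<^sup>+\<omega>. indicator B (X r \<omega>) * ennreal (Z q T \<omega>) \<partial>P q z) / H q T z"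
    using Kk_emeasure[OF I(1,2,3,4,5) z B] unfolding Kop_def H_def .
  also have "H q T z = (\<integral>\<^sup>+\<omega>. indicator (space SE) (X r \<omega>) * ennreal (Z q T \<omega>) \<partial>P q z)"
    unfolding H_def by (rule nn_integral_cong) (use Xr in auto)
  also have "\<dots> = (\<integral>\<^sup>+v. H r T v \<partial>Kk q r r z) * H q r z"
    unfolding NB[OF sets.top] by (rule arg_cong2[where f="(*)"], rule nn_integral_cong) (auto simp: Kk_space)
  finally show ?thesis unfolding NB[OF B] using Hqr by (simp add: divide_mult_eq)
qed

lemma osc_bound:
  assumes I: "r - 1 \<in> I" "r \<in> I" "T \<in> I" "r \<le> T" and x: "x \<in> space SE" and y: "y \<in> space SE"
    and A: "A \<in> sets SE"
  shows "measure (Kk (r - 1) r T x) A - measure (Kk (r - 1) r T y) A \<le> 1 - d_coef I SE X P Z r"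
proof -
  define q where "q = r - 1"
  have Iq: "q \<in> I" "q \<le> r" using I unfolding q_def by auto
  define h where "h = H r T"
  define HS where "HS = Hs r T"
  have hm[measurable]: "h \<in> borel_measurable SE" unfolding h_def using I by (intro H_meas) auto
  have HS_fin: "HS < \<infinity>" unfolding HS_def using Hs_fin I by auto
  have h_le: "\<And>v. v \<in> space SE \<Longrightarrow> h v \<le> HS" unfolding h_def HS_def by (rule H_le)
  define m where "m = nu_meas SE X P Z r x y"
  have Phx: "Phi SE X P Z (r - 1) r (return SE x) = Kk q r r x" unfolding q_def[symmetric] using Phi_return[OF Iq(1) I(2) Iq(2) x] .
  have Phy: "Phi SE X P Z (r - 1) r (return SE y) = Kk q r r y" unfolding q_def[symmetric] using Phi_return[OF Iq(1) I(2) Iq(2) y] .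
  have mdef: "m = min_measure SE (Kk q r r x) (Kk q r r y)" unfolding m_def nu_meas_def Phx Phy ..
  have prK: "\<And>z. z \<in> space SE \<Longrightarrow> prob_space (Kk q r r z)" using Kk_prob Iq I by auto
  have prKT: "\<And>z. z \<in> space SE \<Longrightarrow> prob_space (Kk q r T z)" using Kk_prob Iq I by auto
  have mp: "sets m = sets SE \<and> (\<forall>B\<in>sets SE. emeasure m B \<le> emeasure (Kk q r r x) B \<and> emeasure m B \<le> emeasure (Kk q r r y) B)"
    unfolding mdef by (rule min_measure_props) (use prK x y prob_space.finite_measure in \<open>auto simp: Kk_sets\<close>)
  have sm: "sets m = sets SE" using mp by simp
  have spm: "space m = space SE" using sm sets_eq_imp_space_eq by blast
  have mle: "m \<le> Kk q r r z" if "z = x \<or> z = y" for z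
    by (subst le_measure) (use mp that in \<open>auto simp: Kk_sets\<close>)
  define p where "p B = (\<integral>\<^sup>+v. h v * indicator B v \<partial>m) / HS" for B
  have LB: "p B \<le> emeasure (Kk q r T z) B" if zz: "z = x \<or> z = y" and B: "B \<in> sets SE" for z B
  proof -
    have z: "z \<in> space SE" using zz x y by auto
    let ?K = "Kk q r r z"
    have e: "emeasure (Kk q r T z) B = (\<integral>\<^sup>+v. h v * indicator B v \<partial>?K) / (\<integral>\<^sup>+v. h v \<partial>?K)"
      unfolding h_def by (rule KR[OF Iq(1) I(2,3) Iq(2) I(4) z B])
    have 1: "(\<integral>\<^sup>+v. h v * indicator B v \<partial>m) \<le> (\<integral>\<^sup>+v. h v * indicator B v \<partial>?K)"
      by (rule nn_integral_mono_measure[OF _ mle[OF zz]]) (simp add: sm Kk_sets)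
    have "(\<integral>\<^sup>+v. h v \<partial>?K) \<le> (\<integral>\<^sup>+v. HS \<partial>?K)"
      by (rule nn_integral_mono) (use h_le in \<open>auto simp: Kk_space\<close>)
    also have "\<dots> = HS" using prob_space.emeasure_space_1[OF prK[OF z]] by simp
    finally have 2: "(\<integral>\<^sup>+v. h v \<partial>?K) \<le> HS" .
    show ?thesis unfolding e p_def divide_ennreal_def
      by (rule mult_mono[OF 1 inv_anti[OF 2]]) auto
  qed
  have KTfin: "emeasure (Kk q r T z) B < \<infinity>" if "z \<in> space SE" for z B
  proof -
    have "emeasure (Kk q r T z) B \<noteq> \<infinity>"
      using finite_measure.emeasure_finite[OF prob_space.finite_measure[OF prKT[OF that]]] by simp
    then show ?thesis by (simp add: less_top[symmetric])
  qed
  have pfin: "p B < \<infinity>" if "B \<in> sets SE" for B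
    by (rule order.strict_trans1[OF LB[of x B] KTfin[OF x]]) (use that in auto)
  have Ac: "space SE - A \<in> sets SE" using A by auto
  have mx: "enn2real (p (space SE - A)) \<le> measure (Kk q r T x) (space SE - A)"
    unfolding measure_def by (rule enn2real_mono[OF LB[OF _ Ac]]) (use KTfin x in auto)
  have my: "enn2real (p A) \<le> measure (Kk q r T y) A"
    unfolding measure_def by (rule enn2real_mono[OF LB[OF _ A]]) (use KTfin y in auto)
  have cx: "measure (Kk q r T x) (space SE - A) = 1 - measure (Kk q r T x) A"
    using prob_space.prob_compl[OF prKT[OF x], of A] A by (simp add: Kk_space Kk_sets)
  have psum: "p A + p (space SE - A) = p (space SE)"
  proof -
    have "(\<integral>\<^sup>+v. h v * indicator A v \<partial>m) + (\<integral>\<^sup>+v. h v * indicator (space SE - A) v \<partial>m)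
        = (\<integral>\<^sup>+v. h v * indicator A v + h v * indicator (space SE - A) v \<partial>m)"
      by (rule nn_integral_add[symmetric]) (use A sm in auto)
    also have "\<dots> = (\<integral>\<^sup>+v. h v * indicator (space SE) v \<partial>m)"
      by (rule nn_integral_cong) (use A spm sets.sets_into_space in \<open>auto simp: indicator_def\<close>)
    finally show ?thesis unfolding p_def by (simp add: add_divide_distrib_ennreal[symmetric])
  qed
  have psum': "enn2real (p A) + enn2real (p (space SE - A)) = enn2real (p (space SE))"
    unfolding psum[symmetric] by (rule enn2real_plus[symmetric]) (use pfin A Ac in auto)
  have diff: "measure (Kk q r T x) A - measure (Kk q r T y) A \<le> 1 - enn2real (p (space SE))"
    using mx my cx psum' by linarith
  have dle: "d_coef I SE X P Z r \<le> enn2real (p (space SE))"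
  proof -
    have TI: "T - r \<in> {t. 0 \<le> t \<and> r + t \<in> I}" using I by auto
    have tm: "Emu P r (nu_meas SE X P Z r x y) (\<lambda>\<omega>. ennreal (Z r (r + (T - r)) \<omega>))
        / (SUP x\<in>space SE. \<integral>\<^sup>+\<omega>. ennreal (Z r (r + (T - r)) \<omega>) \<partial>P r x) = p (space SE)"
    proof -
      have "Emu P r m (\<lambda>\<omega>. ennreal (Z r T \<omega>)) = (\<integral>\<^sup>+v. h v * indicator (space SE) v \<partial>m)"
        unfolding Emu_def h_def H_def[symmetric] by (rule nn_integral_cong) (simp add: spm)
      then show ?thesis unfolding p_def HS_def Hs_def H_def m_def by simp
    qed
    have "(INF t\<in>{t. 0 \<le> t \<and> r + t \<in> I}. INF x1\<in>space SE. INF x2\<in>space SE.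
        Emu P r (nu_meas SE X P Z r x1 x2) (\<lambda>\<omega>. ennreal (Z r (r + t) \<omega>))
        / (SUP x\<in>space SE. \<integral>\<^sup>+\<omega>. ennreal (Z r (r + t) \<omega>) \<partial>P r x)) \<le> p (space SE)"
      unfolding tm[symmetric]
      by (rule INF_lower2[OF TI], rule INF_lower2[OF x], rule INF_lower2[OF y]) simp
    then show ?thesis unfolding d_coef_def by (rule enn2real_mono) (use pfin in auto)
  qed
  show ?thesis using diff dle unfolding q_def by linarith
qed

lemma d_le1:
  assumes I: "r - 1 \<in> I" "r \<in> I" "T \<in> I" "r \<le> T" and ne: "space SE \<noteq> {}"
  shows "d_coef I SE X P Z r \<le> 1"
proof -
  obtain x where x: "x \<in> space SE" using ne by auto
  show ?thesis using osc_bound[OF I x x, of "{}"] by simp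
qed

end

context pmk begin

lemma bind_step:
  assumes nu: "prob_space \<nu>" "sets \<nu> = sets SE"
    and I: "s \<in> I" "q \<in> I" "u \<in> I" "T \<in> I" "s \<le> q" "q \<le> u" "u \<le> T"
  shows "bind \<nu> (Kk s u T) = bind (bind \<nu> (Kk s q T)) (Kk q u T)"
proof -
  have sp: "space \<nu> = space SE" using nu(2) sets_eq_imp_space_eq by blast
  have K1: "Kk s q T \<in> measurable \<nu> (subprob_algebra SE)"
    using measurable_prob_algebraD[OF Kk_meas[of s q T]] I measurable_cong_sets[OF nu(2) refl] by auto
  have K2: "Kk q u T \<in> measurable SE (subprob_algebra SE)"
    using measurable_prob_algebraD[OF Kk_meas[of q u T]] I by auto
  have "bind (bind \<nu> (Kk s q T)) (Kk q u T) = bind \<nu> (\<lambda>x. bind (Kk s q T x) (Kk q u T))"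
    by (rule bind_assoc[OF K1 K2])
  also have "\<dots> = bind \<nu> (Kk s u T)"
    by (rule bind_cong[OF refl]) (use Kk_comp[OF I(1,2,3,4,5,6,7)] sp in auto)
  finally show ?thesis ..
qed

lemma bind_prob:
  assumes nu: "prob_space \<nu>" "sets \<nu> = sets SE"
    and I: "s \<in> I" "t \<in> I" "T \<in> I" "s \<le> t" "t \<le> T"
  shows "prob_space (bind \<nu> (Kk s t T)) \<and> sets (bind \<nu> (Kk s t T)) = sets SE"
proof -
  have mu': "\<nu> \<in> space (prob_algebra SE)" using nu by (simp add: space_prob_algebra)
  show ?thesis using prob_space_bind'[OF mu' Kk_meas[OF I]] sets_bind'[OF mu' Kk_meas[OF I]] by simp
qed

lemma factor_nonneg:
  assumes I: "s \<in> I" "t \<in> I" "T \<in> I" "t \<le> T" "real k + 1 \<le> t - s" and ne: "space SE \<noteq> {}"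
  shows "0 \<le> 1 - d_coef I SE X P Z (t - real k)"
proof -
  have s0: "0 \<le> s" using I_nonneg I by auto
  have a: "t - real k - 1 \<in> I" using I_minus[OF I(2), of "Suc k"] I s0 by (simp add: algebra_simps)
  have b: "t - real k \<in> I" using I_minus[OF I(2), of k] I s0 by simp
  show ?thesis using d_le1[OF a b I(3) _ ne] I by simp
qed

lemma chain:
  assumes n1: "prob_space \<nu>1" "sets \<nu>1 = sets SE" and n2: "prob_space \<nu>2" "sets \<nu>2 = sets SE"
    and I: "s \<in> I" "t \<in> I" "T \<in> I" "s \<le> t" "t \<le> T"
  shows "real n \<le> t - s \<Longrightarrow> Sd SE (bind \<nu>1 (Kk s t T)) (bind \<nu>2 (Kk s t T))
    \<le> (\<Prod>k\<in>{0..<n}. 1 - d_coef I SE X P Z (t - real k)) * Sd SE (bind \<nu>1 (Kk s (t - real n) T)) (bind \<nu>2 (Kk s (t - real n) T))"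
proof (induction n)
  case 0
  then show ?case by simp
next
  case (Suc n)
  have ne: "space SE \<noteq> {}" using prob_space.not_empty[OF n1(1)] n1(2) sets_eq_imp_space_eq by metis
  have s0: "0 \<le> s" using I_nonneg I by auto
  define u where "u = t - real n"
  define q where "q = t - real (Suc n)"
  have qu: "q = u - 1" unfolding q_def u_def by simp
  have uI: "u \<in> I" unfolding u_def using I_minus[OF I(2), of n] Suc.prems s0 by simp
  have qI: "q \<in> I" unfolding q_def using I_minus[OF I(2), of "Suc n"] Suc.prems s0 by simp
  have sq: "s \<le> q" "q \<le> u" "u \<le> T" using Suc.prems I unfolding q_def u_def by auto
  have IH: "Sd SE (bind \<nu>1 (Kk s t T)) (bind \<nu>2 (Kk s t T))
    \<le> (\<Prod>k\<in>{0..<n}. 1 - d_coef I SE X P Z (t - real k)) * Sd SE (bind \<nu>1 (Kk s u T)) (bind \<nu>2 (Kk s u T))"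
    unfolding u_def using Suc by simp
  have b1: "prob_space (bind \<nu>1 (Kk s q T)) \<and> sets (bind \<nu>1 (Kk s q T)) = sets SE"
    by (rule bind_prob[OF n1]) (use I qI sq in auto)
  have b2: "prob_space (bind \<nu>2 (Kk s q T)) \<and> sets (bind \<nu>2 (Kk s q T)) = sets SE"
    by (rule bind_prob[OF n2]) (use I qI sq in auto)
  have step: "Sd SE (bind \<nu>1 (Kk s u T)) (bind \<nu>2 (Kk s u T))
      \<le> (1 - d_coef I SE X P Z u) * Sd SE (bind \<nu>1 (Kk s q T)) (bind \<nu>2 (Kk s q T))"
    unfolding bind_step[OF n1 I(1) qI uI I(3) sq] bind_step[OF n2 I(1) qI uI I(3) sq]
  proof (rule contraction)
    show "prob_space (bind \<nu>1 (Kk s q T))" "sets (bind \<nu>1 (Kk s q T)) = sets SE" using b1 by auto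
    show "prob_space (bind \<nu>2 (Kk s q T))" "sets (bind \<nu>2 (Kk s q T)) = sets SE" using b2 by auto
    show "Kk q u T \<in> SE \<rightarrow>\<^sub>M prob_algebra SE" by (rule Kk_meas) (use qI uI I sq in auto)
    fix x y A assume "x \<in> space SE" "y \<in> space SE" "A \<in> sets SE"
    then show "measure (Kk q u T x) A - measure (Kk q u T y) A \<le> 1 - d_coef I SE X P Z u"
      using osc_bound[of u T x y A] qI uI I sq unfolding qu by auto
  qed
  have pn: "0 \<le> (\<Prod>k\<in>{0..<n}. 1 - d_coef I SE X P Z (t - real k))"
    by (rule prod_nonneg) (use factor_nonneg[OF I(1,2,3,5) _ ne] Suc.prems in auto)
  have "Sd SE (bind \<nu>1 (Kk s t T)) (bind \<nu>2 (Kk s t T))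
    \<le> (\<Prod>k\<in>{0..<n}. 1 - d_coef I SE X P Z (t - real k)) * ((1 - d_coef I SE X P Z u) * Sd SE (bind \<nu>1 (Kk s q T)) (bind \<nu>2 (Kk s q T)))"
    using IH mult_left_mono[OF step pn] by linarith
  also have "\<dots> = (\<Prod>k\<in>{0..<Suc n}. 1 - d_coef I SE X P Z (t - real k)) * Sd SE (bind \<nu>1 (Kk s q T)) (bind \<nu>2 (Kk s q T))"
    unfolding u_def by (simp add: prod.atLeast0_lessThan_Suc)
  finally show ?case unfolding q_def .
qed

lemma main_contr:
  assumes n1: "prob_space \<nu>1" "sets \<nu>1 = sets SE" and n2: "prob_space \<nu>2" "sets \<nu>2 = sets SE"
    and I: "s \<in> I" "t \<in> I" "T \<in> I" "s \<le> t" "t \<le> T"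
  shows "Sd SE (bind \<nu>1 (Kk s t T)) (bind \<nu>2 (Kk s t T))
    \<le> (\<Prod>k\<in>{0..<nat \<lfloor>t - s\<rfloor>}. 1 - d_coef I SE X P Z (t - real k)) * Sd SE \<nu>1 \<nu>2
    \<and> 0 \<le> (\<Prod>k\<in>{0..<nat \<lfloor>t - s\<rfloor>}. 1 - d_coef I SE X P Z (t - real k))"
proof -
  define n where "n = nat \<lfloor>t - s\<rfloor>"
  have ne: "space SE \<noteq> {}" using prob_space.not_empty[OF n1(1)] n1(2) sets_eq_imp_space_eq by metis
  have s0: "0 \<le> s" using I_nonneg I by auto
  have nle: "real n \<le> t - s" unfolding n_def using I by linarith
  have uI: "t - real n \<in> I" using I_minus[OF I(2), of n] nle s0 by simp
  have pn: "0 \<le> (\<Prod>k\<in>{0..<n}. 1 - d_coef I SE X P Z (t - real k))"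
    by (rule prod_nonneg) (use factor_nonneg[OF I(1,2,3,5) _ ne] nle in auto)
  have c: "Sd SE (bind \<nu>1 (Kk s (t - real n) T)) (bind \<nu>2 (Kk s (t - real n) T)) \<le> 1 * Sd SE \<nu>1 \<nu>2"
  proof (rule contraction[OF n1 n2])
    show "Kk s (t - real n) T \<in> SE \<rightarrow>\<^sub>M prob_algebra SE" by (rule Kk_meas) (use I uI nle in auto)
    fix x y A assume xy: "x \<in> space SE" "y \<in> space SE" "A \<in> sets SE"
    have "prob_space (Kk s (t - real n) T x)" by (rule Kk_prob) (use I uI nle xy in auto)
    then have "measure (Kk s (t - real n) T x) A \<le> 1" by (rule prob_space.prob_le_1)
    then show "measure (Kk s (t - real n) T x) A - measure (Kk s (t - real n) T y) A \<le> 1"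
      using measure_nonneg[of "Kk s (t - real n) T y" A] by linarith
  qed
  have "Sd SE (bind \<nu>1 (Kk s t T)) (bind \<nu>2 (Kk s t T))
    \<le> (\<Prod>k\<in>{0..<n}. 1 - d_coef I SE X P Z (t - real k)) * Sd SE (bind \<nu>1 (Kk s (t - real n) T)) (bind \<nu>2 (Kk s (t - real n) T))"
    by (rule chain[OF n1 n2 I nle])
  also have "\<dots> \<le> (\<Prod>k\<in>{0..<n}. 1 - d_coef I SE X P Z (t - real k)) * Sd SE \<nu>1 \<nu>2"
    using mult_left_mono[OF c pn] by simp
  finally show ?thesis using pn unfolding n_def by simp
qed

end

theorem theorem2p1:
  fixes I :: "real set" and SE :: "'e measure" and M :: "'w measure"
    and F :: "real \<Rightarrow> real \<Rightarrow> 'w measure" and X :: "real \<Rightarrow> 'w \<Rightarrow> 'e"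
    and P :: "real \<Rightarrow> 'e \<Rightarrow> 'w measure" and Z :: "real \<Rightarrow> real \<Rightarrow> 'w \<Rightarrow> real"
    and \<mu>1 \<mu>2 :: "'e measure" and s t T :: real
  assumes setting: "penalized_markov I SE M F X P Z"
    and mu1: "prob_space \<mu>1" "sets \<mu>1 = sets SE"
    and mu2: "prob_space \<mu>2" "sets \<mu>2 = sets SE"
    and times: "s \<in> I" "t \<in> I" "T \<in> I" "0 \<le> s" "s + 1 \<le> t" "t \<le> T"
  shows "tv_norm SE (muK SE X P Z s t T \<mu>1) (muK SE X P Z s t T \<mu>2)
           \<le> (\<Prod>k\<in>{0..<nat \<lfloor>t - s\<rfloor>}. 1 - d_coef I SE X P Z (t - real k)) * tv_norm SE \<mu>1 \<mu>2
       \<and> tv_norm SE (Phi SE X P Z s t \<mu>1) (Phi SE X P Z s t \<mu>2)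
           \<le> 2 * (\<Prod>k\<in>{0..<nat \<lfloor>t - s\<rfloor>}. 1 - d_coef I SE X P Z (t - real k))"
proof -
  interpret pmk I SE M F X P Z by (rule pmk.intro[OF setting])
  define Pn where "Pn = (\<Prod>k\<in>{0..<nat \<lfloor>t - s\<rfloor>}. 1 - d_coef I SE X P Z (t - real k))"
  have st: "s \<le> t" using times by simp
  have c1: "tv_norm SE (muK SE X P Z s t T \<mu>1) (muK SE X P Z s t T \<mu>2) \<le> Pn * tv_norm SE \<mu>1 \<mu>2"
  proof -
    have b1: "prob_space (bind \<mu>1 (Kk s t T)) \<and> sets (bind \<mu>1 (Kk s t T)) = sets SE"
      by (rule bind_prob[OF mu1]) (use times st in auto)
    have b2: "prob_space (bind \<mu>2 (Kk s t T)) \<and> sets (bind \<mu>2 (Kk s t T)) = sets SE"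
      by (rule bind_prob[OF mu2]) (use times st in auto)
    have mc: "Sd SE (bind \<mu>1 (Kk s t T)) (bind \<mu>2 (Kk s t T)) \<le> Pn * Sd SE \<mu>1 \<mu>2"
      using main_contr[OF mu1 mu2 times(1,2,3) st times(6)] unfolding Pn_def by simp
    have "tv_norm SE (muK SE X P Z s t T \<mu>1) (muK SE X P Z s t T \<mu>2) = 2 * Sd SE (bind \<mu>1 (Kk s t T)) (bind \<mu>2 (Kk s t T))"
      unfolding muK_bind[OF times(1,2,3) st times(6) mu1] muK_bind[OF times(1,2,3) st times(6) mu2]
      by (rule tv_Sd) (use b1 b2 in auto)
    also have "\<dots> \<le> Pn * (2 * Sd SE \<mu>1 \<mu>2)" using mc by simp
    also have "2 * Sd SE \<mu>1 \<mu>2 = tv_norm SE \<mu>1 \<mu>2" by (rule tv_Sd[symmetric]) (use mu1 mu2 in auto)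
    finally show ?thesis .
  qed
  have c2: "tv_norm SE (Phi SE X P Z s t \<mu>1) (Phi SE X P Z s t \<mu>2) \<le> 2 * Pn"
  proof -
    define c1 where "c1 = (\<integral>\<^sup>+x. H s t x \<partial>\<mu>1)"
    define c2 where "c2 = (\<integral>\<^sup>+x. H s t x \<partial>\<mu>2)"
    define \<nu>1 where "\<nu>1 = density \<mu>1 (\<lambda>x. H s t x / c1)"
    define \<nu>2 where "\<nu>2 = density \<mu>2 (\<lambda>x. H s t x / c2)"
    have p1: "prob_space \<nu>1 \<and> sets \<nu>1 = sets SE \<and> Phi SE X P Z s t \<mu>1 = bind \<nu>1 (Kk s t t)"
      unfolding \<nu>1_def c1_def by (rule Phi_bind[OF times(1,2) st mu1])
    have p2: "prob_space \<nu>2 \<and> sets \<nu>2 = sets SE \<and> Phi SE X P Z s t \<mu>2 = bind \<nu>2 (Kk s t t)"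
      unfolding \<nu>2_def c2_def by (rule Phi_bind[OF times(1,2) st mu2])
    have n1: "prob_space \<nu>1" "sets \<nu>1 = sets SE" using p1 by auto
    have n2: "prob_space \<nu>2" "sets \<nu>2 = sets SE" using p2 by auto
    have b1: "prob_space (bind \<nu>1 (Kk s t t)) \<and> sets (bind \<nu>1 (Kk s t t)) = sets SE"
      by (rule bind_prob[OF n1]) (use times st in auto)
    have b2: "prob_space (bind \<nu>2 (Kk s t t)) \<and> sets (bind \<nu>2 (Kk s t t)) = sets SE"
      by (rule bind_prob[OF n2]) (use times st in auto)
    have mc: "Sd SE (bind \<nu>1 (Kk s t t)) (bind \<nu>2 (Kk s t t)) \<le> Pn * Sd SE \<nu>1 \<nu>2" and pn: "0 \<le> Pn"
      using main_contr[OF n1 n2 times(1,2,2) st order_refl] unfolding Pn_def by simp_all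
    have "tv_norm SE (Phi SE X P Z s t \<mu>1) (Phi SE X P Z s t \<mu>2) = 2 * Sd SE (bind \<nu>1 (Kk s t t)) (bind \<nu>2 (Kk s t t))"
      using p1 p2 by (simp add: tv_Sd b1 b2)
    also have "\<dots> \<le> 2 * (Pn * Sd SE \<nu>1 \<nu>2)" using mc by simp
    also have "\<dots> \<le> 2 * (Pn * 1)"
      using mult_left_mono[OF Sd_le1[OF n1(1) n2(1)] pn] by simp
    finally show ?thesis by simp
  qed
  show ?thesis using c1 c2 unfolding Pn_def by simp
qed


end
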